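(* Consider the plant $\dot x=f(x,u)$ with $f$ satisfying Assumption 1, a DT control law $U:\mathbb{R}^n\times[0,\infty)\to\mathbb{R}^m$, and the CT control $u_c(x):=U(x,0)$, with $u_c$ satisfying Assumption 2. Suppose that $U$ is StL and that the pair $(U_c,U)$ is StC, where $U_c(x,T):=u_c(x)$ for all $T\ge0$. Let $\bar F^e_U(x,T):=F^e(x,U(x,T),T)$ be the exact closed-loop DT model. Then the CT closed-loop system $\dot x=h(x):=f(x,u_c(x))$ is: (a) LES if and only if $\bar F^e_U$ is LES-VSR; (b) GALES if and only if $\bar F^e_U$ is SLES-VSR; (c) GES if and only if $\bar F^e_U$ is SES-VSR.
   Context: Assumption 1: $f:\mathbb{R}^n\times\mathbb{R}^m\to\mathbb{R}^n$ satisfies $f(0,0)=0$ and for every $M,M_u\ge0$ there is $L>0$ with $|f(x,u)-f(y,v)|\le L(|x-y|+|u-v|)$ for all $|x|,|y|\le M$, $|u|,|v|\le M_u$. Assumption 2: $u_c:\mathbb{R}^n\to\mathbb{R}^m$ satisfies $u_c(0)=0$ and for every $M\ge0$ there is $L>0$ with $|u_c(x)-u_c(y)|\le L|x-y|$ for all $|x|,|y|\le M$. Exact DT model: $F^e(x,u,T)$ is the value at time $T$ of the solution of $\dot z=f(z,u)$ (with $u$ held constant) with $z(0)=x$, i.e. $F^e(x,u,T)=x+\int_0^Tf(F^e(x,u,s),u)\,ds$. Solutions of a closed-loop DT model $\bar F$ under $\{T_i\}$: $x_{k+1}=\bar F(x_k,T_k)$. $\Phi(T)$: set of sequences $\{T_i\}_{i\ge0}$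 with $T_i\in(0,T)$; $\sum_{i=0}^{-1}T_i=0$. $\mathcal{K},\mathcal{K}_\infty,\mathcal{KL}$: standard comparison function classes. CT stability of $\dot x=h(x)$: GAS if there is $\beta\in\mathcal{KL}$ with $|x(t)|\le\beta(|x_0|,t)$ for all $x_0$, $t\ge0$; GES if moreover $\beta(r,t)=Kre^{-\lambda t}$ with $K\ge1,\lambda>0$; LES if there exist $K\ge1$, $R,\lambda>0$ with $|x(t)|\le K|x_0|e^{-\lambda t}$ for all $|x_0|\le R$, $t\ge0$; GALES if GAS and LES. StL: $U$ is StL if for each $M\ge0$ there exist $K(M)>0$, $T^*(M)>0$ ($T^*$ nonincreasing) such that for all $|x|,|y|\le M$, $T\in[0,T^* )$: $U(0,T)=0$ and $|U(x,T)-U(y,T)|\le K|x-y|$. StC: $(U,V)$ is StC if for each $M\ge0$ there exist $\rho\in\mathcal{K}_\infty$, $T^*(M)>0$ with $|U(x,T)-V(x,T)|\le\rho(T)|x|$ for all $|x|\le M$, $T\in[0,T^* )$. DT stability (VSR): SPS-VSR: there is $\beta\in\mathcal{KL}$ such that for all $M\ge0,R>0$ there is $T^\star(M,R)>0$ with $|x_k|\le\beta(|x_0|,\sum_{i=0}^{k-1}T_i)+R$ for all $k$, $\{T_i\}\in\Phi(T^\star)$, $|x_0|\le M$. LES-VSR: there exist $K\ge1$, $R,T^\star,\lambda>0$ with $|x_k|\le K|x_0|e^{-\lambda\sum_{i=0}^{k-1}T_i}$ for all $k$, $\{T_i\}\in\Phi(T^\star)$, $|x_0|\le R$. SLES-VSR: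 SPS-VSR and LES-VSR. SES-VSR: there exist $K\ge1,\lambda>0$ such that for each $M\ge0$ there is $T^\star(M)>0$ with $|x_k|\le K|x_0|e^{-\lambda\sum_{i=0}^{k-1}T_i}$ for all $k$, $\{T_i\}\in\Phi(T^\star)$, $|x_0|\le M$. *)

theory Defs
  imports "HOL-Analysis.Analysis"
begin

definition class_K :: "(real \<Rightarrow> real) \<Rightarrow> bool" where
  "class_K \<alpha> \<longleftrightarrow> continuous_on {0..} \<alpha> \<and> \<alpha> 0 = 0 \<and> strict_mono_on {0..} \<alpha>"

definition class_Kinf :: "(real \<Rightarrow> real) \<Rightarrow> bool" where
  "class_Kinf \<alpha> \<longleftrightarrow> class_K \<alpha> \<and> filterlim \<alpha> at_top at_top"

definition class_KL :: "(real \<Rightarrow> real \<Rightarrow> real) \<Rightarrow> bool" where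
  "class_KL \<beta> \<longleftrightarrow>
     (\<forall>t\<ge>0. class_K (\<lambda>r. \<beta> r t)) \<and>
     (\<forall>r\<ge>0. antimono_on {0..} (\<lambda>t. \<beta> r t) \<and> ((\<lambda>t. \<beta> r t) \<longlongrightarrow> 0) at_top)"

definition assumption1 :: "(real^'n \<Rightarrow> real^'m \<Rightarrow> real^'n) \<Rightarrow> bool" where
  "assumption1 f \<longleftrightarrow> f 0 0 = 0 \<and>
     (\<forall>M\<ge>0. \<forall>Mu\<ge>0. \<exists>L>0. \<forall>x y u v. norm x \<le> M \<and> norm y \<le> M \<and> norm u \<le> Mu \<and> norm v \<le> Mu
        \<longrightarrow> norm (f x u - f y v) \<le> L * (norm (x - y) + norm (u - v)))"

definition assumption2 :: "(real^'n \<Rightarrow> real^'m) \<Rightarrow> bool" where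
  "assumption2 uc \<longleftrightarrow> uc 0 = 0 \<and>
     (\<forall>M\<ge>0. \<exists>L>0. \<forall>x y. norm x \<le> M \<and> norm y \<le> M \<longrightarrow> norm (uc x - uc y) \<le> L * norm (x - y))"

definition ode_sol :: "(real^'n \<Rightarrow> real^'m \<Rightarrow> real^'n) \<Rightarrow> real^'m \<Rightarrow> real^'n \<Rightarrow> real \<Rightarrow> (real \<Rightarrow> real^'n) \<Rightarrow> bool" where
  "ode_sol f u x T z \<longleftrightarrow> continuous_on {0..T} z \<and>
     (\<forall>t\<in>{0..T}. z t = x + integral {0..t} (\<lambda>s. f (z s) u))"

text \<open>Value at time T of the (unique, by local Lipschitzness) solution.\<close>
definition Fe :: "(real^'n \<Rightarrow> real^'m \<Rightarrow> real^'n) \<Rightarrow> real^'n \<Rightarrow> real^'m \<Rightarrow> real \<Rightarrow> real^'n" where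
  "Fe f x u T = (THE y. \<exists>z. ode_sol f u x T z \<and> z T = y)"

definition ct_sol :: "(real^'n \<Rightarrow> real^'n) \<Rightarrow> real^'n \<Rightarrow> (real \<Rightarrow> real^'n) \<Rightarrow> bool" where
  "ct_sol h x0 z \<longleftrightarrow> continuous_on {0..} z \<and>
     (\<forall>t\<ge>0. z t = x0 + integral {0..t} (\<lambda>s. h (z s)))"

definition GAS :: "(real^'n \<Rightarrow> real^'n) \<Rightarrow> bool" where
  "GAS h \<longleftrightarrow> (\<exists>\<beta>. class_KL \<beta> \<and>
     (\<forall>x0. \<exists>z. ct_sol h x0 z \<and> (\<forall>t\<ge>0. norm (z t) \<le> \<beta> (norm x0) t)))"

definition GES :: "(real^'n \<Rightarrow> real^'n) \<Rightarrow> bool" where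
  "GES h \<longleftrightarrow> (\<exists>K\<ge>1. \<exists>lam>0.
     (\<forall>x0. \<exists>z. ct_sol h x0 z \<and> (\<forall>t\<ge>0. norm (z t) \<le> K * norm x0 * exp (- lam * t))))"

definition LES :: "(real^'n \<Rightarrow> real^'n) \<Rightarrow> bool" where
  "LES h \<longleftrightarrow> (\<exists>K\<ge>1. \<exists>R>0. \<exists>lam>0.
     (\<forall>x0. norm x0 \<le> R \<longrightarrow>
        (\<exists>z. ct_sol h x0 z \<and> (\<forall>t\<ge>0. norm (z t) \<le> K * norm x0 * exp (- lam * t)))))"

definition GALES :: "(real^'n \<Rightarrow> real^'n) \<Rightarrow> bool" where
  "GALES h \<longleftrightarrow> GAS h \<and> LES h"

definition Phi :: "real \<Rightarrow> (nat \<Rightarrow> real) set" where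
  "Phi T = {Ts. \<forall>i. 0 < Ts i \<and> Ts i < T}"

primrec dt_traj :: "('a \<Rightarrow> real \<Rightarrow> 'a) \<Rightarrow> 'a \<Rightarrow> (nat \<Rightarrow> real) \<Rightarrow> nat \<Rightarrow> 'a" where
  "dt_traj Fb x0 Ts 0 = x0"
| "dt_traj Fb x0 Ts (Suc k) = Fb (dt_traj Fb x0 Ts k) (Ts k)"

definition SPS_VSR :: "(real^'n \<Rightarrow> real \<Rightarrow> real^'n) \<Rightarrow> bool" where
  "SPS_VSR Fb \<longleftrightarrow> (\<exists>\<beta>. class_KL \<beta> \<and>
     (\<forall>M\<ge>0. \<forall>R>0. \<exists>Tst>0. \<forall>Ts\<in>Phi Tst. \<forall>x0. norm x0 \<le> M \<longrightarrow>
        (\<forall>k. norm (dt_traj Fb x0 Ts k) \<le> \<beta> (norm x0) (\<Sum>i<k. Ts i) + R)))"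

definition LES_VSR :: "(real^'n \<Rightarrow> real \<Rightarrow> real^'n) \<Rightarrow> bool" where
  "LES_VSR Fb \<longleftrightarrow> (\<exists>K\<ge>1. \<exists>R>0. \<exists>Tst>0. \<exists>lam>0.
     \<forall>Ts\<in>Phi Tst. \<forall>x0. norm x0 \<le> R \<longrightarrow>
        (\<forall>k. norm (dt_traj Fb x0 Ts k) \<le> K * norm x0 * exp (- lam * (\<Sum>i<k. Ts i))))"

definition SLES_VSR :: "(real^'n \<Rightarrow> real \<Rightarrow> real^'n) \<Rightarrow> bool" where
  "SLES_VSR Fb \<longleftrightarrow> SPS_VSR Fb \<and> LES_VSR Fb"

definition SES_VSR :: "(real^'n \<Rightarrow> real \<Rightarrow> real^'n) \<Rightarrow> bool" where
  "SES_VSR Fb \<longleftrightarrow> (\<exists>K\<ge>1. \<exists>lam>0. \<forall>M\<ge>0. \<exists>Tst>0.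
     \<forall>Ts\<in>Phi Tst. \<forall>x0. norm x0 \<le> M \<longrightarrow>
        (\<forall>k. norm (dt_traj Fb x0 Ts k) \<le> K * norm x0 * exp (- lam * (\<Sum>i<k. Ts i))))"

definition StL :: "(real^'n \<Rightarrow> real \<Rightarrow> real^'m) \<Rightarrow> bool" where
  "StL U \<longleftrightarrow> (\<exists>K Tst :: real \<Rightarrow> real.
     antimono_on {0..} Tst \<and>
     (\<forall>M\<ge>0. K M > 0 \<and> Tst M > 0 \<and>
        (\<forall>x y T. norm x \<le> M \<and> norm y \<le> M \<and> 0 \<le> T \<and> T < Tst M \<longrightarrow>
           U 0 T = 0 \<and> norm (U x T - U y T) \<le> K M * norm (x - y))))"

definition StC :: "(real^'n \<Rightarrow> real \<Rightarrow> real^'m) \<Rightarrow> (real^'n \<Rightarrow> real \<Rightarrow> real^'m) \<Rightarrow> bool" where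
  "StC U V \<longleftrightarrow> (\<forall>M\<ge>0. \<exists>\<rho> Tst. class_Kinf \<rho> \<and> Tst > 0 \<and>
     (\<forall>x T. norm x \<le> M \<and> 0 \<le> T \<and> T < Tst \<longrightarrow> norm (U x T - V x T) \<le> \<rho> T * norm x))"

end

theory Submission
  imports Defs
begin


definition sol :: "(real^'n \<Rightarrow> real^'n) \<Rightarrow> real^'n \<Rightarrow> real \<Rightarrow> (real \<Rightarrow> real^'n) \<Rightarrow> bool" where
  "sol g x T z \<longleftrightarrow> continuous_on {0..T} z \<and> (\<forall>t\<in>{0..T}. z t = x + integral {0..t} (\<lambda>s. g (z s)))"

definition loclip :: "(real^'n \<Rightarrow> 'b::real_normed_vector) \<Rightarrow> bool" where
  "loclip g \<longleftrightarrow> (\<forall>M\<ge>0. \<exists>L>0. \<forall>x y. norm x \<le> M \<and> norm y \<le> M \<longrightarrow> norm (g x - g y) \<le> L * norm (x - y))"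

lemma loclip_cont:
  assumes "loclip g" shows "continuous_on S g"
proof -
  have "continuous (at x) g" for x
  proof -
    obtain L where L: "L > 0" "\<And>y z. norm y \<le> norm x + 1 \<Longrightarrow> norm z \<le> norm x + 1 \<Longrightarrow> norm (g y - g z) \<le> L * norm (y - z)"
      using assms unfolding loclip_def by (meson add_nonneg_nonneg norm_ge_zero zero_le_one)
    show ?thesis unfolding continuous_at_eps_delta
    proof (intro allI impI)
      fix e :: real assume e: "e > 0"
      show "\<exists>d>0. \<forall>y. dist y x < d \<longrightarrow> dist (g y) (g x) < e"
      proof (intro exI[of _ "min 1 (e / L)"] conjI allI impI)
        show "0 < min 1 (e / L)" using e L by auto
        fix y assume y: "dist y x < min 1 (e / L)"
        have ny: "norm y \<le> norm x + 1" using y norm_triangle_sub[of y x] by (auto simp: dist_norm)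
        have "norm (g y - g x) \<le> L * norm (y - x)" using L(2)[OF ny] by auto
        also have "\<dots> < L * (e / L)" using y L by (intro mult_strict_left_mono) (auto simp: dist_norm)
        also have "\<dots> = e" using L by simp
        finally show "dist (g y) (g x) < e" by (simp add: dist_norm)
      qed
    qed
  qed
  then show ?thesis by (simp add: continuous_at_imp_continuous_on)
qed

lemma integral_bound_const:
  fixes k :: "real \<Rightarrow> 'a::euclidean_space"
  assumes "k integrable_on {a..b}" "a \<le> b" "\<And>s. s \<in> {a..b} \<Longrightarrow> norm (k s) \<le> C"
  shows "norm (integral {a..b} k) \<le> C * (b - a)"
proof -
  have "norm (integral {a..b} k) \<le> integral {a..b} (\<lambda>s. C)"
    by (rule integral_norm_bound_integral) (use assms in auto)
  also have "\<dots> = C * (b-a)" using assms by simp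
  finally show ?thesis .
qed

lemma gronwall_weak:
  fixes w :: "real \<Rightarrow> real"
  assumes cont: "continuous_on {0..t} w" and a: "0 \<le> a" and L: "0 < L"
    and nonneg: "\<And>s. s \<in> {0..t} \<Longrightarrow> 0 \<le> w s"
    and ineq: "\<And>s. s \<in> {0..t} \<Longrightarrow> w s \<le> a + L * integral {0..s} w"
    and s: "s \<in> {0..t}"
  shows "w s \<le> 2 * a * exp (2 * L * s)"
proof -
  define \<phi> where "\<phi> r = w r * exp (- (2 * L * r))" for r
  have "continuous_on {0..t} \<phi>" unfolding \<phi>_def by (intro continuous_intros cont)
  then obtain r0 where r0: "r0 \<in> {0..t}" and mx: "\<And>r. r \<in> {0..t} \<Longrightarrow> \<phi> r \<le> \<phi> r0"
    using continuous_attains_sup[of "{0..t}" \<phi>] s by auto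
  define m where "m = \<phi> r0"
  have m0: "0 \<le> m" unfolding m_def \<phi>_def using nonneg[OF r0] by simp
  have wle: "w r \<le> m * exp (2 * L * r)" if "r \<in> {0..t}" for r
  proof -
    have "w r = \<phi> r * exp (2 * L * r)" unfolding \<phi>_def by (simp add: exp_minus field_simps)
    also have "\<dots> \<le> m * exp (2 * L * r)" using mx[OF that] unfolding m_def by simp
    finally show ?thesis .
  qed
  have key: "w r \<le> a + m * (exp (2 * L * r) - 1) / 2" if r: "r \<in> {0..t}" for r
  proof -
    have der: "\<And>x. x\<in>{0..r} \<Longrightarrow> ((\<lambda>x. m * exp (2 * L * x) / (2 * L)) has_vector_derivative m * exp (2 * L * x)) (at x within {0..r})"
      using L by (auto intro!: derivative_eq_intros simp: has_real_derivative_iff_has_vector_derivative[symmetric])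
    have hi: "((\<lambda>x. m * exp (2 * L * x)) has_integral (m * exp (2 * L * r) / (2 * L) - m * exp (2 * L * 0) / (2 * L))) {0..r}"
      using fundamental_theorem_of_calculus[OF _ der] r by auto
    have "integral {0..r} w \<le> integral {0..r} (\<lambda>x. m * exp (2 * L * x))"
    proof (rule integral_le)
      show "w integrable_on {0..r}" using r by (intro integrable_continuous_real continuous_on_subset[OF cont]) auto
      show "(\<lambda>x. m * exp (2 * L * x)) integrable_on {0..r}" using hi by blast
      show "\<And>x. x\<in>{0..r} \<Longrightarrow> w x \<le> m * exp (2 * L * x)" using wle r by auto
    qed
    also have "\<dots> = m * exp (2 * L * r) / (2 * L) - m / (2 * L)" using integral_unique[OF hi] by simp
    finally have "L * integral {0..r} w \<le> L * (m * exp (2 * L * r) / (2 * L) - m / (2 * L))"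
      using L by (simp add: mult_left_mono)
    also have "\<dots> = m * (exp (2 * L * r) - 1) / 2" using L by (simp add: field_simps)
    finally show ?thesis using ineq[OF r] by linarith
  qed
  have "m \<le> a + m / 2"
  proof -
    have "m = w r0 * exp (- (2 * L * r0))" unfolding m_def \<phi>_def ..
    also have "\<dots> \<le> (a + m * (exp (2 * L * r0) - 1) / 2) * exp (- (2 * L * r0))"
      using key[OF r0] by (simp add: mult_right_mono)
    also have "\<dots> = a * exp (- (2 * L * r0)) + m / 2 - m / 2 * exp (- (2 * L * r0))"
      by (simp add: field_simps exp_minus)
    also have "\<dots> \<le> a + m / 2"
    proof -
      have "exp (- (2 * L * r0)) \<le> 1" using L r0 by simp
      hence "a * exp (- (2 * L * r0)) \<le> a" using a by (simp add: mult_left_le)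
      moreover have "0 \<le> m / 2 * exp (- (2 * L * r0))" using m0 by simp
      ultimately show ?thesis by linarith
    qed
    finally show ?thesis .
  qed
  hence "m \<le> 2 * a" by linarith
  thus ?thesis using wle[OF s] by (smt (verit) exp_gt_zero mult_right_mono)
qed



lemma local_existence:
  fixes g :: "real^'n \<Rightarrow> real^'n"
  assumes L: "0 < L" and G: "0 < G"
    and lip: "\<And>x y. x \<in> cball x0 1 \<Longrightarrow> y \<in> cball x0 1 \<Longrightarrow> norm (g x - g y) \<le> L * norm (x - y)"
    and bnd: "\<And>x. x \<in> cball x0 1 \<Longrightarrow> norm (g x) \<le> G"
    and T: "0 \<le> T" "T * G \<le> 1" "T * L \<le> 1/2"
  shows "\<exists>z. sol g x0 T z \<and> (\<forall>t\<in>{0..T}. norm (z t - x0) \<le> G * t)"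
proof -
  define p where "p = closest_point (cball x0 (1::real))"
  have pin: "p y \<in> cball x0 1" for y
    unfolding p_def by (rule closest_point_in_set) auto
  have pid: "y \<in> cball x0 1 \<Longrightarrow> p y = y" for y
    unfolding p_def by (rule closest_point_self)
  have plip: "dist (p y) (p y') \<le> dist y y'" for y y'
    unfolding p_def by (rule closest_point_lipschitz) auto
  define gt where "gt y = g (p y)" for y
  have gtlip: "norm (gt y - gt y') \<le> L * norm (y - y')" for y y'
  proof -
    have "norm (gt y - gt y') \<le> L * norm (p y - p y')" unfolding gt_def using lip[OF pin pin] .
    also have "\<dots> \<le> L * norm (y - y')" using plip[of y y'] L by (simp add: dist_norm)
    finally show ?thesis .
  qed
  have gtb: "norm (gt y) \<le> G" for y unfolding gt_def using bnd[OF pin] .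
  have gtc: "continuous_on S gt" for S
  proof -
    have "loclip gt" unfolding loclip_def using L gtlip by blast
    thus ?thesis by (rule loclip_cont)
  qed
  define cl where "cl t = max 0 (min T t)" for t :: real
  have clin: "cl t \<in> {0..T}" for t unfolding cl_def using T by auto
  have clid: "t \<in> {0..T} \<Longrightarrow> cl t = t" for t unfolding cl_def by auto
  have clc: "continuous_on UNIV cl" unfolding cl_def by (intro continuous_intros)
  define F where "F z t = x0 + integral {0..cl t} (\<lambda>s. gt (apply_bcontfun z s))" for z :: "(real, real^'n) bcontfun" and t
  have intg: "(\<lambda>s. gt (apply_bcontfun z s)) integrable_on {a..b}" for z :: "(real, real^'n) bcontfun" and a b
  proof (rule integrable_continuous_real)
    have "continuous_on {a..b} (gt \<circ> apply_bcontfun z)"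
      by (intro continuous_on_compose continuous_on_apply_bcontfun gtc)
    thus "continuous_on {a..b} (\<lambda>s. gt (apply_bcontfun z s))" by (simp add: o_def)
  qed
  have Fb: "F z \<in> bcontfun" for z
  proof (rule bcontfun_normI)
    have "continuous_on {0..T} (\<lambda>t. integral {0..t} (\<lambda>s. gt (apply_bcontfun z s)))"
      by (rule indefinite_integral_continuous_1[OF intg])
    hence "continuous_on UNIV (\<lambda>t. integral {0..cl t} (\<lambda>s. gt (apply_bcontfun z s)))"
      by (rule continuous_on_compose2[OF _ clc, of "{0..T}"]) (use clin in auto)
    thus "continuous_on UNIV (F z)" unfolding F_def by (intro continuous_intros)
    fix t
    have "norm (integral {0..cl t} (\<lambda>s. gt (apply_bcontfun z s))) \<le> G * (cl t - 0)"
      by (rule integral_bound_const[OF intg]) (use clin gtb in auto)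
    also have "\<dots> \<le> G * T" using clin[of t] G by (auto intro: mult_left_mono)
    finally show "norm (F z t) \<le> norm x0 + G * T" unfolding F_def
      by (meson add_left_mono norm_triangle_ineq order_trans)
  qed
  define \<Phi> where "\<Phi> z = Bcontfun (F z)" for z
  have Phi_app: "apply_bcontfun (\<Phi> z) = F z" for z
    unfolding \<Phi>_def using Fb by (simp add: Bcontfun_inverse)
  have contr: "dist (\<Phi> z) (\<Phi> z') \<le> (1/2) * dist z z'" for z z'
  proof (rule dist_bound)
    fix t
    have "F z t - F z' t = integral {0..cl t} (\<lambda>s. gt (apply_bcontfun z s) - gt (apply_bcontfun z' s))"
      unfolding F_def by (simp add: integral_diff[OF intg intg])
    also have "norm \<dots> \<le> (L * dist z z') * (cl t - 0)"
    proof (rule integral_bound_const)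
      show "(\<lambda>s. gt (apply_bcontfun z s) - gt (apply_bcontfun z' s)) integrable_on {0..cl t}"
        by (intro integrable_diff intg)
      show "0 \<le> cl t" using clin by auto
      fix s
      have "norm (gt (apply_bcontfun z s) - gt (apply_bcontfun z' s)) \<le> L * norm (apply_bcontfun z s - apply_bcontfun z' s)"
        by (rule gtlip)
      also have "\<dots> \<le> L * dist z z'" using dist_bounded[of z s z'] L by (simp add: dist_norm)
      finally show "norm (gt (apply_bcontfun z s) - gt (apply_bcontfun z' s)) \<le> L * dist z z'" .
    qed
    also have "\<dots> \<le> (1/2) * dist z z'"
    proof -
      have "L * (cl t - 0) \<le> L * T" using clin[of t] L by auto
      hence "L * (cl t - 0) \<le> 1/2" using T by (simp add: mult.commute)
      from mult_right_mono[OF this zero_le_dist[of z z']] show ?thesis by (simp add: algebra_simps)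
    qed
    finally show "dist (apply_bcontfun (\<Phi> z) t) (apply_bcontfun (\<Phi> z') t) \<le> 1 / 2 * dist z z'"
      by (simp add: Phi_app dist_norm)
  qed
  obtain zf where zf: "\<Phi> zf = zf" using banach_fix_type[of "1/2" \<Phi>] contr by auto
  define zz where "zz = apply_bcontfun zf"
  have zzF: "zz t = F zf t" for t
  proof -
    have "zz t = apply_bcontfun (\<Phi> zf) t" unfolding zz_def using zf by simp
    thus ?thesis by (simp add: Phi_app)
  qed
  have eq1: "zz t = x0 + integral {0..t} (\<lambda>s. gt (zz s))" if "t \<in> {0..T}" for t
    using zzF[of t] clid[OF that] unfolding F_def zz_def by simp
  have bnd1: "norm (zz t - x0) \<le> G * t" if "t \<in> {0..T}" for t
  proof -
    have "norm (zz t - x0) = norm (integral {0..t} (\<lambda>s. gt (zz s)))" using eq1[OF that] by simp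
    also have "\<dots> \<le> G * (t - 0)" unfolding zz_def by (rule integral_bound_const[OF intg]) (use that gtb in auto)
    finally show ?thesis by simp
  qed
  have inball: "zz t \<in> cball x0 1" if "t \<in> {0..T}" for t
  proof -
    have "G * t \<le> G * T" using that G by (auto intro: mult_left_mono)
    thus ?thesis using bnd1[OF that] T by (simp add: dist_norm norm_minus_commute mult.commute)
  qed
  have "sol g x0 T zz"
    unfolding sol_def
  proof (intro conjI ballI)
    show "continuous_on {0..T} zz" unfolding zz_def by simp
    fix t assume t: "t \<in> {0..T}"
    have "integral {0..t} (\<lambda>s. gt (zz s)) = integral {0..t} (\<lambda>s. g (zz s))"
      by (rule integral_cong) (use t inball pid in \<open>auto simp: gt_def\<close>)
    thus "zz t = x0 + integral {0..t} (\<lambda>s. g (zz s))" using eq1[OF t] by simp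
  qed
  thus ?thesis using bnd1 by blast
qed

lemma sol_cont_comp:
  assumes "loclip g" "sol g x T z"
  shows "continuous_on {0..T} (\<lambda>s. g (z s))"
  using assms unfolding sol_def by (auto intro: continuous_on_compose2[OF loclip_cont[OF assms(1)]])

lemma sol_integrable:
  assumes "loclip g" "sol g x T z" "t \<le> T"
  shows "(\<lambda>s. g (z s)) integrable_on {0..t}"
  using assms by (intro integrable_continuous_real continuous_on_subset[OF sol_cont_comp[OF assms(1,2)]]) auto

lemma sol_bounded:
  assumes "sol g x T z"
  obtains B where "B \<ge> 0" "\<And>t. t \<in> {0..T} \<Longrightarrow> norm (z t) \<le> B"
proof -
  have "compact (z ` {0..T})" using assms unfolding sol_def by (intro compact_continuous_image) auto
  then obtain B where B: "\<forall>y\<in>z ` {0..T}. norm y \<le> B" using compact_imp_bounded bounded_iff by metis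
  show ?thesis
  proof (rule that[of "max B 0"])
    fix t assume "t \<in> {0..T}"
    thus "norm (z t) \<le> max B 0" using B by (metis imageI max.coboundedI1)
  qed simp
qed

lemma sol_unique:
  assumes lc: "loclip g" and s1: "sol g x T z1" and s2: "sol g x T z2" and t: "t \<in> {0..T}"
  shows "z1 t = z2 t"
proof -
  obtain B1 where B1: "B1 \<ge> 0" "\<And>t. t \<in> {0..T} \<Longrightarrow> norm (z1 t) \<le> B1" using sol_bounded[OF s1] by metis
  obtain B2 where B2: "B2 \<ge> 0" "\<And>t. t \<in> {0..T} \<Longrightarrow> norm (z2 t) \<le> B2" using sol_bounded[OF s2] by metis
  obtain L where L: "L > 0" "\<And>x y. norm x \<le> max B1 B2 \<Longrightarrow> norm y \<le> max B1 B2 \<Longrightarrow> norm (g x - g y) \<le> L * norm (x - y)"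
    using lc unfolding loclip_def using B1(1) by (meson max.coboundedI1)
  define w where "w s = norm (z1 s - z2 s)" for s
  have wc: "continuous_on {0..T} w" unfolding w_def using s1 s2 unfolding sol_def by (auto intro!: continuous_intros)
  have "w s \<le> 0 + L * integral {0..s} w" if s: "s \<in> {0..T}" for s
  proof -
    have "z1 s - z2 s = integral {0..s} (\<lambda>r. g (z1 r) - g (z2 r))"
      using s1 s2 s unfolding sol_def
      by (simp add: integral_diff[OF sol_integrable[OF lc s1] sol_integrable[OF lc s2]])
    hence "w s = norm (integral {0..s} (\<lambda>r. g (z1 r) - g (z2 r)))" unfolding w_def by simp
    also have "\<dots> \<le> integral {0..s} (\<lambda>r. L * w r)"
    proof (rule integral_norm_bound_integral)
      show "(\<lambda>r. g (z1 r) - g (z2 r)) integrable_on {0..s}"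
        using s by (intro integrable_diff sol_integrable[OF lc s1] sol_integrable[OF lc s2]) auto
      show "(\<lambda>r. L * w r) integrable_on {0..s}"
        using s by (intro integrable_continuous_real continuous_intros continuous_on_subset[OF wc]) auto
      fix r assume r: "r \<in> {0..s}"
      hence r': "r \<in> {0..T}" using s by auto
      show "norm (g (z1 r) - g (z2 r)) \<le> L * w r" unfolding w_def
        using L(2)[of "z1 r" "z2 r"] B1(2)[OF r'] B2(2)[OF r'] by auto
    qed
    also have "\<dots> = L * integral {0..s} w" by simp
    finally show ?thesis by simp
  qed
  hence "w t \<le> 2 * 0 * exp (2 * L * t)"
    by (intro gronwall_weak[OF wc _ L(1) _ _ t]) (auto simp: w_def)
  thus ?thesis unfolding w_def by simp
qed



locale sys =
  fixes f :: "real^'n \<Rightarrow> real^'m \<Rightarrow> real^'n" and U :: "real^'n \<Rightarrow> real \<Rightarrow> real^'m"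
  assumes A1: "assumption1 f" and A2: "assumption2 (\<lambda>x. U x 0)"
    and SL: "StL U" and SC: "StC (\<lambda>x T. U x 0) U"
begin

definition uc where "uc x = U x 0"
definition h where "h x = f x (uc x)"
definition Fb where "Fb x T = Fe f x (U x T) T"

lemma f00: "f 0 0 = 0" using A1 unfolding assumption1_def by blast
lemma uc0: "uc 0 = 0" using A2 unfolding assumption2_def uc_def by blast
lemma h0: "h 0 = 0" unfolding h_def using f00 uc0 by simp

lemma constants:
  assumes "0 \<le> B"
  obtains Lc KU TU Lf \<rho> T\<rho> where
    "Lc > 0" "\<And>x y. norm x \<le> B+2 \<Longrightarrow> norm y \<le> B+2 \<Longrightarrow> norm (uc x - uc y) \<le> Lc * norm (x - y)"
    "KU > 0" "TU > 0" "\<And>x y T. norm x \<le> B+2 \<Longrightarrow> norm y \<le> B+2 \<Longrightarrow> 0 \<le> T \<Longrightarrow> T < TU \<Longrightarrow> U 0 T = 0 \<and> norm (U x T - U y T) \<le> KU * norm (x - y)"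
    "Lf > 0" "\<And>x y u v. norm x \<le> B+2 \<Longrightarrow> norm y \<le> B+2 \<Longrightarrow> norm u \<le> (KU+Lc)*(B+2) \<Longrightarrow> norm v \<le> (KU+Lc)*(B+2) \<Longrightarrow> norm (f x u - f y v) \<le> Lf * (norm (x-y) + norm (u-v))"
    "class_Kinf \<rho>" "T\<rho> > 0" "\<And>x T. norm x \<le> B+2 \<Longrightarrow> 0 \<le> T \<Longrightarrow> T < T\<rho> \<Longrightarrow> norm (uc x - U x T) \<le> \<rho> T * norm x"
proof -
  have M: "0 \<le> B + 2" using assms by simp
  obtain Lc where Lc0: "Lc > 0" and Lc1: "\<forall>x y. norm x \<le> B+2 \<and> norm y \<le> B+2 \<longrightarrow> norm (U x 0 - U y 0) \<le> Lc * norm (x - y)"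
    using A2[unfolded assumption2_def, THEN conjunct2, rule_format, OF M] by blast
  have Lc: "Lc > 0" "\<And>x y. norm x \<le> B+2 \<Longrightarrow> norm y \<le> B+2 \<Longrightarrow> norm (uc x - uc y) \<le> Lc * norm (x - y)"
    using Lc0 Lc1 unfolding uc_def by auto
  obtain Kf Tf :: "real \<Rightarrow> real" where KT: "\<forall>M\<ge>0. Kf M > 0 \<and> Tf M > 0 \<and>
        (\<forall>x y T. norm x \<le> M \<and> norm y \<le> M \<and> 0 \<le> T \<and> T < Tf M \<longrightarrow>
           U 0 T = 0 \<and> norm (U x T - U y T) \<le> Kf M * norm (x - y))"
    using SL unfolding StL_def by blast
  define KU where "KU = Kf (B+2)"
  define TU where "TU = Tf (B+2)"
  have KT': "KU > 0 \<and> TU > 0 \<and> (\<forall>x y T. norm x \<le> B+2 \<and> norm y \<le> B+2 \<and> 0 \<le> T \<and> T < TU \<longrightarrow>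
           U 0 T = 0 \<and> norm (U x T - U y T) \<le> KU * norm (x - y))"
    unfolding KU_def TU_def using KT[rule_format, OF M] .
  have KU: "KU > 0" "TU > 0" "\<And>x y T. norm x \<le> B+2 \<Longrightarrow> norm y \<le> B+2 \<Longrightarrow> 0 \<le> T \<Longrightarrow> T < TU \<Longrightarrow> U 0 T = 0 \<and> norm (U x T - U y T) \<le> KU * norm (x - y)"
    using KT' by auto
  have Mu: "0 \<le> (KU+Lc)*(B+2)" using KU Lc M by simp
  obtain Lf where Lf0: "Lf > 0" and Lf1: "\<forall>x y u v. norm x \<le> B+2 \<and> norm y \<le> B+2 \<and> norm u \<le> (KU+Lc)*(B+2) \<and> norm v \<le> (KU+Lc)*(B+2) \<longrightarrow> norm (f x u - f y v) \<le> Lf * (norm (x-y) + norm (u-v))"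
    using A1[unfolded assumption1_def, THEN conjunct2, rule_format, OF M Mu] by blast
  have Lf: "Lf > 0" "\<And>x y u v. norm x \<le> B+2 \<Longrightarrow> norm y \<le> B+2 \<Longrightarrow> norm u \<le> (KU+Lc)*(B+2) \<Longrightarrow> norm v \<le> (KU+Lc)*(B+2) \<Longrightarrow> norm (f x u - f y v) \<le> Lf * (norm (x-y) + norm (u-v))"
    using Lf0 Lf1 by auto
  obtain \<rho> T\<rho> where rho0: "class_Kinf \<rho>" "T\<rho> > 0" and rho1: "\<forall>x T. norm x \<le> B+2 \<and> 0 \<le> T \<and> T < T\<rho> \<longrightarrow> norm (U x 0 - U x T) \<le> \<rho> T * norm x"
    using SC[unfolded StC_def, rule_format, OF M] by blast
  have rho: "class_Kinf \<rho>" "T\<rho> > 0" "\<And>x T. norm x \<le> B+2 \<Longrightarrow> 0 \<le> T \<Longrightarrow> T < T\<rho> \<Longrightarrow> norm (uc x - U x T) \<le> \<rho> T * norm x"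
    using rho0 rho1 unfolding uc_def by auto
  show ?thesis using that[OF Lc KU Lf rho] .
qed

lemma loclip_h: "loclip h"
  unfolding loclip_def
proof (intro allI impI)
  fix M :: real assume M: "0 \<le> M"
  obtain Lc KU TU Lf \<rho> T\<rho> where C: 
    "Lc > 0" "\<And>x y. norm x \<le> M+2 \<Longrightarrow> norm y \<le> M+2 \<Longrightarrow> norm (uc x - uc y) \<le> Lc * norm (x - y)"
    "KU > 0" "TU > 0" "\<And>x y T. norm x \<le> M+2 \<Longrightarrow> norm y \<le> M+2 \<Longrightarrow> 0 \<le> T \<Longrightarrow> T < TU \<Longrightarrow> U 0 T = 0 \<and> norm (U x T - U y T) \<le> KU * norm (x - y)"
    "Lf > 0" "\<And>x y u v. norm x \<le> M+2 \<Longrightarrow> norm y \<le> M+2 \<Longrightarrow> norm u \<le> (KU+Lc)*(M+2) \<Longrightarrow> norm v \<le> (KU+Lc)*(M+2) \<Longrightarrow> norm (f x u - f y v) \<le> Lf * (norm (x-y) + norm (u-v))"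
    "class_Kinf \<rho>" "T\<rho> > 0" "\<And>x T. norm x \<le> M+2 \<Longrightarrow> 0 \<le> T \<Longrightarrow> T < T\<rho> \<Longrightarrow> norm (uc x - U x T) \<le> \<rho> T * norm x"
    using constants[OF M] by blast
  have ucb: "norm (uc x) \<le> (KU+Lc)*(M+2)" if "norm x \<le> M + 2" for x :: "real^'n"
  proof -
    have "norm (uc x) \<le> Lc * norm x" using C(2)[OF that, of 0] uc0 M by simp
    also have "\<dots> \<le> Lc * (M+2)" using that C(1) by (simp add: mult_left_mono)
    also have "\<dots> \<le> (KU+Lc)*(M+2)" using C(3) M by (simp add: mult_right_mono)
    finally show ?thesis .
  qed
  show "\<exists>L>0. \<forall>x y. norm x \<le> M \<and> norm y \<le> M \<longrightarrow> norm (h x - h y) \<le> L * norm (x - y)"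
  proof (intro exI[of _ "Lf * (1 + Lc)"] conjI allI impI)
    show "0 < Lf * (1 + Lc)" using C by simp
    fix x y :: "real^'n" assume xy: "norm x \<le> M \<and> norm y \<le> M"
    hence xy': "norm x \<le> M+2" "norm y \<le> M+2" by auto
    have "norm (h x - h y) \<le> Lf * (norm (x-y) + norm (uc x - uc y))"
      unfolding h_def by (rule C(7)[OF xy' ucb[OF xy'(1)] ucb[OF xy'(2)]])
    also have "\<dots> \<le> Lf * (norm (x-y) + Lc * norm (x - y))"
      using C(2)[OF xy'] C(6) by (simp add: mult_left_mono)
    also have "\<dots> = Lf * (1 + Lc) * norm (x - y)" by (simp add: algebra_simps)
    finally show "norm (h x - h y) \<le> Lf * (1 + Lc) * norm (x - y)" .
  qed
qed

lemma loclip_fu: "loclip (\<lambda>v. f v u)"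
  unfolding loclip_def
proof (intro allI impI)
  fix M :: real assume M: "0 \<le> M"
  obtain L where L: "L > 0" "\<forall>x y u' v. norm x \<le> M \<and> norm y \<le> M \<and> norm u' \<le> norm u \<and> norm v \<le> norm u
        \<longrightarrow> norm (f x u' - f y v) \<le> L * (norm (x - y) + norm (u' - v))"
    using A1 M unfolding assumption1_def by (meson norm_ge_zero)
  show "\<exists>L>0. \<forall>x y. norm x \<le> M \<and> norm y \<le> M \<longrightarrow> norm (f x u - f y u) \<le> L * norm (x - y)"
  proof (intro exI[of _ L] conjI allI impI)
    fix x y :: "real^'n" assume "norm x \<le> M \<and> norm y \<le> M"
    thus "norm (f x u - f y u) \<le> L * norm (x - y)" using L(2)[rule_format, of x y u u] by simp
  qed (use L in auto)
qed

lemma ode_sol_eq: "ode_sol f u x T z \<longleftrightarrow> sol (\<lambda>v. f v u) x T z"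
  unfolding ode_sol_def sol_def ..

lemma Fe_eq:
  assumes "sol (\<lambda>v. f v u) x T z" "0 \<le> T"
  shows "Fe f x u T = z T"
  unfolding Fe_def
proof (rule the_equality)
  show "\<exists>z'. ode_sol f u x T z' \<and> z' T = z T" using assms ode_sol_eq by blast
  fix y assume "\<exists>z'. ode_sol f u x T z' \<and> z' T = y"
  then obtain z' where "sol (\<lambda>v. f v u) x T z'" "z' T = y" using ode_sol_eq by blast
  thus "y = z T" using sol_unique[OF loclip_fu, of u x T z' z T] assms by auto
qed

lemma h_lin:
  assumes "0 \<le> B"
  obtains Lh where "Lh > 0" "\<And>x. norm x \<le> B \<Longrightarrow> norm (h x) \<le> Lh * norm x"
proof -
  obtain L where L: "L > 0" "\<And>x y. norm x \<le> B \<Longrightarrow> norm y \<le> B \<Longrightarrow> norm (h x - h y) \<le> L * norm (x - y)"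
    using loclip_h assms unfolding loclip_def by blast
  show ?thesis
  proof (rule that[OF L(1)])
    fix x :: "real^'n" assume "norm x \<le> B"
    thus "norm (h x) \<le> L * norm x" using L(2)[of x 0] h0 assms by simp
  qed
qed

end


lemma classK_small:
  assumes "class_K \<rho>" "e > 0"
  shows "\<exists>d>0. \<forall>T. 0 \<le> T \<and> T < d \<longrightarrow> \<rho> T < e"
proof -
  have c: "continuous_on {0..} \<rho>" and z: "\<rho> 0 = 0" using assms unfolding class_K_def by auto
  obtain d where d: "d > 0" "\<forall>x'\<in>{0..}. dist x' 0 < d \<longrightarrow> dist (\<rho> x') (\<rho> 0) < e"
    using c[unfolded continuous_on_iff] assms(2) by (meson atLeast_iff order_refl)
  show ?thesis using d z by (intro exI[of _ d]) (auto simp: dist_real_def)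
qed

lemma classK_nonneg:
  assumes "class_K \<rho>" "0 \<le> T" shows "0 \<le> \<rho> T"
proof (cases "T = 0")
  case True thus ?thesis using assms unfolding class_K_def by simp
next
  case False
  have sm: "strict_mono_on {0..} \<rho>" and z: "\<rho> 0 = 0" using assms unfolding class_K_def by auto
  have "\<rho> 0 < \<rho> T" using False assms(2) by (intro strict_mono_onD[OF sm]) auto
  thus ?thesis using z by simp
qed

context sys begin

lemma sol_shift:
  assumes s: "sol h x0 \<tau> z" and a: "0 \<le> a" and as: "a + s \<le> \<tau>" and s0: "0 \<le> s"
  shows "z (a + s) = z a + integral {0..s} (\<lambda>r. h (z (a + r)))"
proof -
  have int: "(\<lambda>r. h (z r)) integrable_on {0..a+s}" by (rule sol_integrable[OF loclip_h s as])
  have "integral {0..a} (\<lambda>r. h (z r)) + integral {a..a+s} (\<lambda>r. h (z r)) = integral {0..a+s} (\<lambda>r. h (z r))"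
    by (rule Henstock_Kurzweil_Integration.integral_combine[OF a _ int]) (use s0 in simp)
  moreover have "integral {0..s} (\<lambda>r. h (z (a + r))) = integral {a..a+s} (\<lambda>r. h (z r))"
    using integral_shift_Icc_real[of 0 s "\<lambda>r. h (z r)" a] by (simp add: o_def add.commute)
  moreover have "z (a+s) = x0 + integral {0..a+s} (\<lambda>r. h (z r))" "z a = x0 + integral {0..a} (\<lambda>r. h (z r))"
    using s a as s0 unfolding sol_def by auto
  ultimately show ?thesis by (simp add: algebra_simps)
qed

lemma sol_shift_cont:
  assumes s: "sol h x0 \<tau> z" and a: "0 \<le> a" and as: "a + T \<le> \<tau>"
  shows "continuous_on {0..T} (\<lambda>r. h (z (a + r)))"
proof -
  have "continuous_on {0..T} ((\<lambda>r. h (z r)) \<circ> (\<lambda>r. a + r))"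
  proof (rule continuous_on_compose)
    show "continuous_on {0..T} ((+) a)" by (intro continuous_intros)
    show "continuous_on ((+) a ` {0..T}) (\<lambda>r. h (z r))"
      by (rule continuous_on_subset[OF sol_cont_comp[OF loclip_h s]]) (use a as in auto)
  qed
  thus ?thesis by (simp add: o_def)
qed

lemma sol_shift_cont_z:
  assumes s: "sol h x0 \<tau> z" and a: "0 \<le> a" and as: "a + T \<le> \<tau>"
  shows "continuous_on {0..T} (\<lambda>r. z (a + r))"
proof -
  have "continuous_on {0..T} (z \<circ> (\<lambda>r. a + r))"
  proof (rule continuous_on_compose)
    show "continuous_on {0..T} ((+) a)" by (intro continuous_intros)
    show "continuous_on ((+) a ` {0..T}) z"
      by (rule continuous_on_subset) (use s a as in \<open>auto simp: sol_def\<close>)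
  qed
  thus ?thesis by (simp add: o_def)
qed

end


context sys begin

lemma step_core:
  fixes Lf Lc Lh P e Q T Dm \<rho>T :: real
  assumes "0 \<le> e" "0 \<le> P" "0 < T" "T * Lf \<le> 1/2" "0 < Lf" "0 < Lc" "0 < Lh" "0 \<le> \<rho>T" "\<rho>T \<le> 1"
    and Q: "Q = Lf * (\<rho>T * (P + e) + Lc * (e + Lh * P * T))"
  shows "(e + Q * T) * (1 + 2 * Lf * T) \<le> e * (1 + 2 * Lf * (2 + Lc) * T) + T * (2 * Lf * (\<rho>T + Lc * Lh * T)) * P"
proof -
  define A where "A = T * Lf"
  have A: "0 \<le> A" "A \<le> 1/2" using assms unfolding A_def by auto
  have QT: "Q * T = e * (A * (\<rho>T + Lc)) + A * P * (\<rho>T + Lc * Lh * T)"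
    unfolding Q A_def by (simp add: algebra_simps)
  have t1: "(1 + A * (\<rho>T + Lc)) * (1 + 2 * A) \<le> 1 + 4 * A + 2 * A * Lc"
  proof -
    have "(1 + A * (\<rho>T + Lc)) * (1 + 2 * A) = 1 + 2 * A + A * (\<rho>T + Lc) + (2 * A) * (A * (\<rho>T + Lc))"
      by (simp add: algebra_simps)
    also have "(2 * A) * (A * (\<rho>T + Lc)) \<le> 1 * (A * (\<rho>T + Lc))"
      using A assms by (intro mult_right_mono) auto
    also have "A * (\<rho>T + Lc) \<le> A * (1 + Lc)" using A assms by (intro mult_left_mono) auto
    finally show ?thesis by (simp add: algebra_simps)
  qed
  have t2: "A * P * (\<rho>T + Lc * Lh * T) * (1 + 2 * A) \<le> A * P * (\<rho>T + Lc * Lh * T) * 2"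
    using A assms by (intro mult_left_mono) auto
  have "(e + Q * T) * (1 + 2 * Lf * T) = e * ((1 + A * (\<rho>T + Lc)) * (1 + 2 * A)) + A * P * (\<rho>T + Lc * Lh * T) * (1 + 2 * A)"
    unfolding QT A_def by (simp add: algebra_simps)
  also have "\<dots> \<le> e * (1 + 4 * A + 2 * A * Lc) + A * P * (\<rho>T + Lc * Lh * T) * 2"
    using add_mono[OF mult_left_mono[OF t1] t2] assms by simp
  also have "\<dots> = e * (1 + 2 * Lf * (2 + Lc) * T) + T * (2 * Lf * (\<rho>T + Lc * Lh * T)) * P"
    unfolding A_def by (simp add: algebra_simps)
  finally show ?thesis .
qed

lemma step:
  assumes B: "0 \<le> B"
  shows "\<exists>K\<ge>0. \<exists>T1>0. \<exists>\<delta>. (\<forall>\<eta>>0. \<exists>T2>0. \<forall>T. 0 < T \<and> T < T2 \<longrightarrow> \<delta> T \<le> \<eta>) \<and>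
    (\<forall>T y z x0 \<tau> a P. 0 < T \<and> T < T1 \<and> sol h x0 \<tau> z \<and> 0 \<le> a \<and> a + T \<le> \<tau> \<and>
       (\<forall>s\<in>{0..\<tau>}. norm (z s) \<le> B) \<and> (\<forall>s\<in>{a..a+T}. norm (z s) \<le> P) \<and> norm (y - z a) \<le> 1 \<longrightarrow>
       norm (Fb y T - z (a+T)) \<le> norm (y - z a) * (1 + K * T) + T * \<delta> T * P)"
proof -
  obtain Lc KU TU Lf \<rho> T\<rho> where
    Lc: "Lc > 0" "\<And>x y. norm x \<le> B+2 \<Longrightarrow> norm y \<le> B+2 \<Longrightarrow> norm (uc x - uc y) \<le> Lc * norm (x - y)"
    and KU: "KU > 0" "TU > 0" "\<And>x y T. norm x \<le> B+2 \<Longrightarrow> norm y \<le> B+2 \<Longrightarrow> 0 \<le> T \<Longrightarrow> T < TU \<Longrightarrow> U 0 T = 0 \<and> norm (U x T - U y T) \<le> KU * norm (x - y)"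
    and Lf: "Lf > 0" "\<And>x y u v. norm x \<le> B+2 \<Longrightarrow> norm y \<le> B+2 \<Longrightarrow> norm u \<le> (KU+Lc)*(B+2) \<Longrightarrow> norm v \<le> (KU+Lc)*(B+2) \<Longrightarrow> norm (f x u - f y v) \<le> Lf * (norm (x-y) + norm (u-v))"
    and rho: "class_Kinf \<rho>" "T\<rho> > 0" "\<And>x T. norm x \<le> B+2 \<Longrightarrow> 0 \<le> T \<Longrightarrow> T < T\<rho> \<Longrightarrow> norm (uc x - U x T) \<le> \<rho> T * norm x"
    using constants[OF B] by blast
  have rK: "class_K \<rho>" using rho(1) unfolding class_Kinf_def by blast
  define Mu where "Mu = (KU+Lc)*(B+2)"
  have Mu0: "0 \<le> Mu" unfolding Mu_def using KU Lc B by simp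
  have ucb: "norm (uc x) \<le> Lc * norm x" if "norm x \<le> B+2" for x :: "real^'n"
    using Lc(2)[OF that, of 0] uc0 B by simp
  have ucMu: "norm (uc x) \<le> Mu" if "norm x \<le> B+2" for x :: "real^'n"
  proof -
    have "norm (uc x) \<le> Lc * (B+2)" using ucb[OF that] Lc(1) that by (meson mult_left_mono order.trans less_imp_le)
    also have "\<dots> \<le> Mu" unfolding Mu_def using KU B by (simp add: mult_right_mono)
    finally show ?thesis .
  qed
  define Lh where "Lh = Lf * (1 + Lc)"
  have Lh0: "Lh > 0" unfolding Lh_def using Lf Lc by simp
  have hb: "norm (h x) \<le> Lh * norm x" if "norm x \<le> B+2" for x :: "real^'n"
  proof -
    have "norm (h x) = norm (f x (uc x) - f 0 0)" unfolding h_def using f00 by simp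
    also have "\<dots> \<le> Lf * (norm (x - 0) + norm (uc x - 0))"
      by (rule Lf(2)) (use that ucMu[OF that] Mu_def B Mu0 in auto)
    also have "\<dots> \<le> Lf * (norm x + Lc * norm x)" using ucb[OF that] Lf(1) by (simp add: mult_left_mono)
    finally show ?thesis unfolding Lh_def by (simp add: algebra_simps)
  qed
  define G where "G = Lf * (B + 2 + Mu)"
  have G0: "G > 0" unfolding G_def using Lf B Mu0 by simp
  obtain d1 where d1: "d1 > 0" "\<And>T. 0 \<le> T \<Longrightarrow> T < d1 \<Longrightarrow> \<rho> T < 1" using classK_small[OF rK, of 1] by auto
  define T1 where "T1 = min (min (1/G) (1/(2*Lf))) (min TU (min T\<rho> d1))"
  have T1: "T1 > 0" unfolding T1_def using G0 Lf KU rho d1 by auto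
  define \<delta> where "\<delta> T = 2 * Lf * (\<rho> T + Lc * Lh * T)" for T
  define K where "K = 2 * Lf * (2 + Lc)"
  have K0: "K \<ge> 0" unfolding K_def using Lf Lc by simp
  have dsmall: "\<forall>\<eta>>0. \<exists>T2>0. \<forall>T. 0 < T \<and> T < T2 \<longrightarrow> \<delta> T \<le> \<eta>"
  proof (intro allI impI)
    fix \<eta> :: real assume \<eta>: "\<eta> > 0"
    obtain d where d: "d > 0" "\<And>T. 0 \<le> T \<Longrightarrow> T < d \<Longrightarrow> \<rho> T < \<eta> / (4 * Lf)"
      using classK_small[OF rK, of "\<eta> / (4 * Lf)"] \<eta> Lf by auto
    define T2 where "T2 = min d (\<eta> / (4 * Lf * Lc * Lh))"
    show "\<exists>T2>0. \<forall>T. 0 < T \<and> T < T2 \<longrightarrow> \<delta> T \<le> \<eta>"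
    proof (intro exI[of _ T2] conjI allI impI)
      show "T2 > 0" unfolding T2_def using d \<eta> Lf Lc Lh0 by auto
      fix T assume T: "0 < T \<and> T < T2"
      have r: "\<rho> T \<le> \<eta> / (4 * Lf)" using d(2)[of T] T unfolding T2_def by auto
      have "T \<le> \<eta> / (4 * Lf * Lc * Lh)" using T unfolding T2_def by auto
      hence "Lc * Lh * T \<le> Lc * Lh * (\<eta> / (4 * Lf * Lc * Lh))" by (intro mult_left_mono) (use Lc Lh0 in auto)
      also have "\<dots> = \<eta> / (4 * Lf)" using Lc Lh0 by (simp add: field_simps)
      finally have "\<rho> T + Lc * Lh * T \<le> \<eta> / (2 * Lf)" using r by (simp add: field_simps)
      hence "2 * Lf * (\<rho> T + Lc * Lh * T) \<le> 2 * Lf * (\<eta> / (2 * Lf))" by (intro mult_left_mono) (use Lf in auto)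
      thus "\<delta> T \<le> \<eta>" unfolding \<delta>_def using Lf by simp
    qed
  qed
  have main: "norm (Fb y T - z (a+T)) \<le> norm (y - z a) * (1 + K * T) + T * \<delta> T * P"
    if T: "0 < T" "T < T1" and s: "sol h x0 \<tau> z" and a: "0 \<le> a" "a + T \<le> \<tau>"
      and zB: "\<forall>s\<in>{0..\<tau>}. norm (z s) \<le> B" and zP: "\<forall>s\<in>{a..a+T}. norm (z s) \<le> P"
      and ye: "norm (y - z a) \<le> 1"
    for T y z x0 \<tau> a P
  proof -
    define e where "e = norm (y - z a)"
    define u where "u = U y T"
    have e0: "0 \<le> e" unfolding e_def by simp
    have TG: "T * G \<le> 1" "T * Lf \<le> 1/2" "T < TU" "T < T\<rho>" "\<rho> T < 1"
    proof -
      have "T < 1/G" "T < 1/(2*Lf)" "T < TU" "T < T\<rho>" "T < d1" using T unfolding T1_def by auto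
      thus "T * G \<le> 1" "T * Lf \<le> 1/2" "T < TU" "T < T\<rho>" "\<rho> T < 1"
        using G0 Lf d1(2)[of T] T by (auto simp: field_simps)
    qed
    have rT0: "0 \<le> \<rho> T" using classK_nonneg[OF rK] T by simp
    have zaB: "norm (z a) \<le> B" using zB a T by auto
    have zaP: "norm (z a) \<le> P" using zP a T by auto
    have P0: "0 \<le> P" using zaP norm_ge_zero order.trans by blast
    have yB: "norm y \<le> B + 1"
      using ye zaB norm_triangle_sub[of y "z a"] by (simp add: norm_minus_commute)
    have yP: "norm y \<le> P + e"
      using zaP norm_triangle_sub[of y "z a"] unfolding e_def by (simp add: norm_minus_commute)
    have uMu: "norm u \<le> Mu"
    proof -
      have KK: "U 0 T = 0 \<and> norm (U y T - U 0 T) \<le> KU * norm (y - 0)"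
        by (rule KU(3)) (use yB B TG T in auto)
      have "norm u \<le> KU * norm y" using KK unfolding u_def by auto
      also have "\<dots> \<le> KU * (B+2)" using yB KU(1) by (simp add: mult_left_mono)
      also have "\<dots> \<le> Mu" unfolding Mu_def using Lc B by (simp add: mult_right_mono)
      finally show ?thesis .
    qed
    have ball: "norm v \<le> B + 2" if "v \<in> cball y 1" for v
      using that yB norm_triangle_sub[of v y] by (auto simp: dist_norm norm_minus_commute)
    obtain w where w: "sol (\<lambda>v. f v u) y T w" "\<forall>t\<in>{0..T}. norm (w t - y) \<le> G * t"
    proof -
      have "\<exists>w. sol (\<lambda>v. f v u) y T w \<and> (\<forall>t\<in>{0..T}. norm (w t - y) \<le> G * t)"
      proof (rule local_existence[OF Lf(1) G0])
        fix v v' assume v: "v \<in> cball y 1" "v' \<in> cball y 1"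
        show "norm (f v u - f v' u) \<le> Lf * norm (v - v')"
          using Lf(2)[OF ball[OF v(1)] ball[OF v(2)], of u u] uMu Mu_def by simp
      next
        fix v assume v: "v \<in> cball y 1"
        have "norm (f v u) = norm (f v u - f 0 0)" using f00 by simp
        also have "\<dots> \<le> Lf * (norm (v - 0) + norm (u - 0))"
          by (rule Lf(2)) (use ball[OF v] uMu Mu_def B Mu0 in auto)
        also have "\<dots> \<le> Lf * (B + 2 + Mu)" using ball[OF v] uMu Lf(1) by (intro mult_left_mono) auto
        finally show "norm (f v u) \<le> G" unfolding G_def .
      qed (use T TG in auto)
      thus ?thesis using that by blast
    qed
    have wball: "norm (w t) \<le> B + 2" if "t \<in> {0..T}" for t
    proof -
      have "G * t \<le> G * T" using that G0 by (intro mult_left_mono) auto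
      moreover have "norm (w t - y) \<le> G * t" using w(2) that by blast
      ultimately have "norm (w t - y) \<le> 1" using TG(1) by (simp add: mult.commute)
      thus ?thesis using ball[of "w t"] by (auto simp: dist_norm norm_minus_commute)
    qed
    have FbT: "Fb y T = w T" unfolding Fb_def u_def[symmetric] using Fe_eq[OF w(1)] T by simp
    define k where "k r = f (w r) u - h (z (a + r))" for r
    have wc: "continuous_on {0..T} w" using w(1) unfolding sol_def by blast
    have fwc: "continuous_on {0..T} (\<lambda>r. f (w r) u)"
      using sol_cont_comp[OF loclip_fu w(1)] .
    have hzc: "continuous_on {0..T} (\<lambda>r. h (z (a + r)))" by (rule sol_shift_cont[OF s a])
    have kc: "continuous_on {0..T} k" unfolding k_def by (intro continuous_intros fwc hzc)
    have kint: "k integrable_on {0..t}" if "t \<in> {0..T}" for t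
      using that by (intro integrable_continuous_real continuous_on_subset[OF kc]) auto
    have diffeq: "w t - z (a + t) = (y - z a) + integral {0..t} k" if t: "t \<in> {0..T}" for t
    proof -
      have "w t = y + integral {0..t} (\<lambda>r. f (w r) u)" using w(1) t unfolding sol_def by blast
      moreover have "z (a + t) = z a + integral {0..t} (\<lambda>r. h (z (a + r)))"
        using sol_shift[OF s a(1)] a t by auto
      moreover have "integral {0..t} k = integral {0..t} (\<lambda>r. f (w r) u) - integral {0..t} (\<lambda>r. h (z (a + r)))"
        unfolding k_def using t
        by (intro integral_diff integrable_continuous_real continuous_on_subset[OF fwc] continuous_on_subset[OF hzc]) auto
      ultimately show ?thesis by (simp add: algebra_simps)
    qed
    define D where "D t = norm (w t - z (a + t))" for t
    have Dc: "continuous_on {0..T} D" unfolding D_def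
      by (intro continuous_intros wc sol_shift_cont_z[OF s a])
    define Q where "Q = Lf * (\<rho> T * (P + e) + Lc * (e + Lh * P * T))"
    have Q0: "0 \<le> Q" unfolding Q_def using Lf Lc Lh0 rT0 P0 e0 T by simp
    have zdrift: "norm (z (a + r) - z a) \<le> Lh * P * r" if r: "r \<in> {0..T}" for r
    proof -
      have "norm (z (a + r) - z a) = norm (integral {0..r} (\<lambda>q. h (z (a + q))))"
        using sol_shift[OF s a(1)] a r by auto
      also have "\<dots> \<le> (Lh * P) * (r - 0)"
      proof (rule integral_bound_const)
        show "(\<lambda>q. h (z (a + q))) integrable_on {0..r}"
          using r by (intro integrable_continuous_real continuous_on_subset[OF hzc]) auto
        fix q assume q: "q \<in> {0..r}"
        have q1: "a + q \<in> {0..\<tau>}" "a + q \<in> {a..a+T}" using q r a by auto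
        have "norm (z (a + q)) \<le> B" using zB q1(1) by blast
        hence "norm (h (z (a + q))) \<le> Lh * norm (z (a + q))" using hb by simp
        also have "\<dots> \<le> Lh * P" using zP q1 Lh0 by (simp add: mult_left_mono)
        finally show "norm (h (z (a + q))) \<le> Lh * P" .
      qed (use r in auto)
      finally show ?thesis by simp
    qed
    have kb: "norm (k r) \<le> Lf * D r + Q" if r: "r \<in> {0..T}" for r
    proof -
      have r1: "a + r \<in> {0..\<tau>}" using r a by auto
      have zr: "norm (z (a + r)) \<le> B + 2" using zB[rule_format, OF r1] by simp
      have "norm (k r) \<le> Lf * (norm (w r - z (a + r)) + norm (u - uc (z (a + r))))"
        unfolding k_def h_def by (rule Lf(2)) (use wball[OF r] zr uMu ucMu[OF zr] Mu_def in auto)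
      also have "norm (u - uc (z (a + r))) \<le> \<rho> T * (P + e) + Lc * (e + Lh * P * T)"
      proof -
        have "norm (u - uc (z (a + r))) \<le> norm (u - uc y) + norm (uc y - uc (z (a + r)))"
          using norm_triangle_ineq[of "u - uc y" "uc y - uc (z (a + r))"] by simp
        also have "norm (u - uc y) \<le> \<rho> T * norm y"
          using rho(3)[of y T] yB TG T unfolding u_def by (simp add: norm_minus_commute)
        also have "\<rho> T * norm y \<le> \<rho> T * (P + e)" using yP rT0 by (simp add: mult_left_mono)
        also have "norm (uc y - uc (z (a + r))) \<le> Lc * norm (y - z (a + r))" using Lc(2) yB zr by simp
        also have "norm (y - z (a + r)) \<le> e + Lh * P * T"
        proof -
          have "norm (y - z (a + r)) \<le> norm (y - z a) + norm (z (a + r) - z a)"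
            using norm_triangle_ineq4[of "y - z a" "z (a + r) - z a"] by (simp add: algebra_simps)
          also have "Lh * P * r \<le> Lh * P * T" using r Lh0 P0 by (intro mult_left_mono) auto
          hence "norm (z (a + r) - z a) \<le> Lh * P * T" using zdrift[OF r] by linarith
          finally show ?thesis unfolding e_def by simp
        qed
        hence "Lc * norm (y - z (a + r)) \<le> Lc * (e + Lh * P * T)" using Lc(1) by (simp add: mult_left_mono)
        finally show ?thesis by simp
      qed
      hence "Lf * (norm (w r - z (a + r)) + norm (u - uc (z (a + r)))) \<le> Lf * (D r + (\<rho> T * (P + e) + Lc * (e + Lh * P * T)))"
        unfolding D_def using Lf(1) by (intro mult_left_mono) auto
      finally show ?thesis unfolding Q_def by (simp add: algebra_simps)
    qed
    obtain r0 where r0: "r0 \<in> {0..T}" and Dmax: "\<And>r. r \<in> {0..T} \<Longrightarrow> D r \<le> D r0"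
      using continuous_attains_sup[of "{0..T}" D] Dc T by auto
    define Dm where "Dm = D r0"
    have Dm0: "0 \<le> Dm" unfolding Dm_def D_def by simp
    have Dbound: "D t \<le> e + Lf * T * Dm + Q * T" if t: "t \<in> {0..T}" for t
    proof -
      have "D t = norm ((y - z a) + integral {0..t} k)" unfolding D_def using diffeq[OF t] by simp
      also have "\<dots> \<le> e + norm (integral {0..t} k)" unfolding e_def by (rule norm_triangle_ineq)
      also have "norm (integral {0..t} k) \<le> (Lf * Dm + Q) * (t - 0)"
      proof (rule integral_bound_const[OF kint[OF t]])
        fix r assume r: "r \<in> {0..t}"
        hence r': "r \<in> {0..T}" using t by auto
        have "Lf * D r \<le> Lf * Dm" unfolding Dm_def using Dmax[OF r'] Lf(1) by (simp add: mult_left_mono)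
        thus "norm (k r) \<le> Lf * Dm + Q" using kb[OF r'] by linarith
      qed (use t in auto)
      also have "(Lf * Dm + Q) * (t - 0) \<le> (Lf * Dm + Q) * T" using t Lf Dm0 Q0 by (intro mult_left_mono) auto
      finally show ?thesis by (simp add: algebra_simps)
    qed
    have "Dm \<le> e + Lf * T * Dm + Q * T" unfolding Dm_def using Dbound[OF r0] unfolding Dm_def .
    moreover have "Lf * T * Dm \<le> Dm / 2"
    proof -
      have "Lf * T \<le> 1/2" using TG(2) by (simp add: mult.commute)
      from mult_right_mono[OF this Dm0] show ?thesis by simp
    qed
    ultimately have "Dm \<le> 2 * e + 2 * (Q * T)" by linarith
    hence Dm2: "Dm \<le> 2 * (e + Q * T)" by (simp add: algebra_simps)
    have "D T \<le> e + Lf * T * Dm + Q * T" using Dbound T by auto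
    also have "Lf * T * Dm \<le> Lf * T * (2 * (e + Q * T))" using Dm2 Lf T by (intro mult_left_mono) auto
    finally have DT: "D T \<le> (e + Q * T) * (1 + 2 * Lf * T)" by (simp add: algebra_simps)
    also have "\<dots> \<le> e * (1 + 2 * Lf * (2 + Lc) * T) + T * (2 * Lf * (\<rho> T + Lc * Lh * T)) * P"
      by (rule step_core[OF e0 P0 T(1) TG(2) Lf(1) Lc(1) Lh0 rT0 _ Q_def]) (use TG in linarith)
    finally show ?thesis unfolding D_def FbT e_def K_def \<delta>_def by simp
  qed
  show ?thesis
    apply (rule exI[of _ K], rule conjI[OF K0], rule exI[of _ T1], rule conjI[OF T1], rule exI[of _ \<delta>], rule conjI[OF dsmall])
    apply (intro allI impI)
    apply (elim conjE)
    apply (rule main)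
            apply assumption+
    done
qed

end


context sys begin

lemma sol_at0: assumes "sol g x T z" "0 \<le> T" shows "z 0 = x"
  using assms unfolding sol_def by auto

lemma sol_lin_bound:
  assumes s: "sol h x0 \<tau> z" and zB: "\<forall>s\<in>{0..\<tau>}. norm (z s) \<le> B" and Lh: "Lh > 0"
    and hb: "\<And>x. norm x \<le> B \<Longrightarrow> norm (h x) \<le> Lh * norm x" and t: "t \<in> {0..\<tau>}"
  shows "norm (z t) \<le> 2 * norm x0 * exp (2 * Lh * t)"
proof -
  have zc: "continuous_on {0..\<tau>} z" using s unfolding sol_def by blast
  have wc: "continuous_on {0..\<tau>} (\<lambda>s. norm (z s))" by (intro continuous_intros zc)
  have "norm (z t) \<le> 2 * norm x0 * exp (2 * Lh * t)"
  proof (rule gronwall_weak[OF wc _ Lh _ _ t])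
    fix s assume sr: "s \<in> {0..\<tau>}"
    have "norm (z s) = norm (x0 + integral {0..s} (\<lambda>r. h (z r)))" using s sr unfolding sol_def by auto
    also have "\<dots> \<le> norm x0 + norm (integral {0..s} (\<lambda>r. h (z r)))" by (rule norm_triangle_ineq)
    also have "norm (integral {0..s} (\<lambda>r. h (z r))) \<le> integral {0..s} (\<lambda>r. Lh * norm (z r))"
    proof (rule integral_norm_bound_integral)
      show "(\<lambda>r. h (z r)) integrable_on {0..s}" using sr by (intro sol_integrable[OF loclip_h s]) auto
      show "(\<lambda>r. Lh * norm (z r)) integrable_on {0..s}"
        using sr by (intro integrable_continuous_real continuous_intros continuous_on_subset[OF zc]) auto
      fix r assume "r \<in> {0..s}"
      hence "r \<in> {0..\<tau>}" using sr by auto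
      thus "norm (h (z r)) \<le> Lh * norm (z r)" using hb zB by blast
    qed
    also have "\<dots> = Lh * integral {0..s} (\<lambda>r. norm (z r))" by simp
    finally show "norm (z s) \<le> norm x0 + Lh * integral {0..s} (\<lambda>r. norm (z r))" by simp
  qed auto
  thus ?thesis .
qed

lemma exp_step:
  fixes c e t T K :: real
  assumes "0 \<le> c" "0 \<le> T" "0 \<le> K" "0 \<le> t" "e \<le> c * t * exp (K * t)"
  shows "e * (1 + K * T) + T * c \<le> c * (t + T) * exp (K * (t + T))"
proof -
  have e1: "exp (K * T) \<ge> 1" using assms by simp
  have "e * (1 + K * T) \<le> c * t * exp (K * t) * (1 + K * T)"
    using assms by (intro mult_right_mono) auto
  also have "\<dots> \<le> c * t * exp (K * t) * exp (K * T)"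
    using assms by (intro mult_left_mono) auto
  also have "\<dots> = c * t * exp (K * (t + T))" by (simp add: distrib_left exp_add)
  finally have a: "e * (1 + K * T) \<le> c * t * exp (K * (t + T))" .
  have "1 \<le> exp (K * (t + T))" using assms by simp
  from mult_left_mono[OF this, of "T * c"] have "T * c \<le> T * c * exp (K * (t + T))" using assms by simp
  with a show ?thesis by (simp add: algebra_simps)
qed

lemma CL:
  assumes B: "0 \<le> B" and tau: "0 < \<tau>" and eps: "0 < \<epsilon>"
  shows "\<exists>Tst>0. \<forall>Ts\<in>Phi Tst. \<forall>x0 z. sol h x0 \<tau> z \<and> (\<forall>s\<in>{0..\<tau>}. norm (z s) \<le> B) \<longrightarrow>
     (\<forall>k. (\<Sum>i<k. Ts i) \<le> \<tau> \<longrightarrow> norm (dt_traj Fb x0 Ts k - z (\<Sum>i<k. Ts i)) \<le> \<epsilon> * norm x0)"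
proof -
  obtain K T1 \<delta> where K: "K \<ge> 0" and T1: "T1 > 0" and dsm: "\<forall>\<eta>>0. \<exists>T2>0. \<forall>T. 0 < T \<and> T < T2 \<longrightarrow> \<delta> T \<le> \<eta>"
    and stH: "\<forall>T y z xx \<tau> a P. 0 < T \<and> T < T1 \<and> sol h xx \<tau> z \<and> 0 \<le> a \<and> a + T \<le> \<tau> \<and>
       (\<forall>s\<in>{0..\<tau>}. norm (z s) \<le> B) \<and> (\<forall>s\<in>{a..a+T}. norm (z s) \<le> P) \<and> norm (y - z a) \<le> 1 \<longrightarrow>
       norm (Fb y T - z (a+T)) \<le> norm (y - z a) * (1 + K * T) + T * \<delta> T * P"
    using step[OF B] by blast
  obtain Lh where Lh: "Lh > 0" "\<And>x. norm x \<le> B \<Longrightarrow> norm (h x) \<le> Lh * norm x" using h_lin[OF B] by blast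
  define C where "C = 2 * exp (2 * Lh * \<tau>)"
  define E where "E = C * \<tau> * exp (K * \<tau>)"
  have C0: "C > 0" and E0: "E \<ge> 0" unfolding C_def E_def using tau by auto
  define \<epsilon>' where "\<epsilon>' = min \<epsilon> (1 / (B + 1))"
  have e'0: "\<epsilon>' > 0" unfolding \<epsilon>'_def using eps B by auto
  define \<eta> where "\<eta> = \<epsilon>' / (E + 1)"
  have \<eta>0: "\<eta> > 0" unfolding \<eta>_def using e'0 E0 by auto
  obtain T2 where T2: "T2 > 0" "\<And>T. 0 < T \<Longrightarrow> T < T2 \<Longrightarrow> \<delta> T \<le> \<eta>" using dsm \<eta>0 by blast
  have \<eta>E: "\<eta> * E \<le> \<epsilon>'"
  proof -
    have "\<eta> * E = \<epsilon>' * (E / (E + 1))" unfolding \<eta>_def by simp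
    also have "\<dots> \<le> \<epsilon>' * 1" using E0 e'0 by (intro mult_left_mono) auto
    finally show ?thesis by simp
  qed
  show ?thesis
  proof (intro exI[of _ "min T1 T2"] conjI ballI allI impI)
    show "min T1 T2 > 0" using T1 T2 by simp
    fix Ts x0 z k assume Ts: "Ts \<in> Phi (min T1 T2)" and hz: "sol h x0 \<tau> z \<and> (\<forall>s\<in>{0..\<tau>}. norm (z s) \<le> B)"
    have s: "sol h x0 \<tau> z" and zB: "\<forall>s\<in>{0..\<tau>}. norm (z s) \<le> B" using hz by auto
    have Tsp: "0 < Ts i" "Ts i < T1" "Ts i < T2" for i using Ts unfolding Phi_def by auto
    have z0: "z 0 = x0" using sol_at0[OF s] tau by simp
    have x0B: "norm x0 \<le> B" using zB[rule_format, of 0] z0 tau by simp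
    have zC: "norm (z s) \<le> C * norm x0" if "s \<in> {0..\<tau>}" for s
    proof -
      have "norm (z s) \<le> 2 * norm x0 * exp (2 * Lh * s)" by (rule sol_lin_bound[OF s zB Lh(1) Lh(2) that])
      also have "\<dots> \<le> 2 * norm x0 * exp (2 * Lh * \<tau>)" using that Lh by (intro mult_left_mono) auto
      finally show ?thesis unfolding C_def by (simp add: algebra_simps)
    qed
    define c where "c = \<eta> * C * norm x0"
    have c0: "c \<ge> 0" unfolding c_def using \<eta>0 C0 by simp
    define t where "t k = (\<Sum>i<k. Ts i)" for k
    have t0: "t k \<ge> 0" for k unfolding t_def using Tsp by (simp add: sum_nonneg less_imp_le)
    have tS: "t (Suc k) = t k + Ts k" for k unfolding t_def by simp
    have ebig: "c * \<tau> * exp (K * \<tau>) \<le> \<epsilon>' * norm x0"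
    proof -
      have "c * \<tau> * exp (K * \<tau>) = (\<eta> * E) * norm x0" unfolding c_def E_def by (simp add: algebra_simps)
      also have "\<dots> \<le> \<epsilon>' * norm x0" using \<eta>E by (intro mult_right_mono) auto
      finally show ?thesis .
    qed
    have cle: "c * t k * exp (K * t k) \<le> c * \<tau> * exp (K * \<tau>)" if "t k \<le> \<tau>" for k
      using that c0 t0[of k] K by (intro mult_mono mult_left_mono) (auto intro: mult_left_mono)
    have e'x: "\<epsilon>' * norm x0 \<le> 1"
    proof -
      have "\<epsilon>' * norm x0 \<le> (1 / (B + 1)) * (B + 1)" unfolding \<epsilon>'_def using x0B B
        by (intro mult_mono) auto
      thus ?thesis using B by simp
    qed
    have claim: "t k \<le> \<tau> \<longrightarrow> norm (dt_traj Fb x0 Ts k - z (t k)) \<le> c * t k * exp (K * t k)" for k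
    proof (induction k)
      case 0 thus ?case using z0 by (simp add: t_def)
    next
      case (Suc k)
      show ?case
      proof
        assume tk1: "t (Suc k) \<le> \<tau>"
        have tk: "t k \<le> \<tau>" using tk1 tS[of k] Tsp(1)[of k] by linarith
        have IH: "norm (dt_traj Fb x0 Ts k - z (t k)) \<le> c * t k * exp (K * t k)" using Suc tk by blast
        have e1: "norm (dt_traj Fb x0 Ts k - z (t k)) \<le> 1" using IH cle[OF tk] ebig e'x by linarith
        have "norm (Fb (dt_traj Fb x0 Ts k) (Ts k) - z (t k + Ts k)) \<le>
            norm (dt_traj Fb x0 Ts k - z (t k)) * (1 + K * Ts k) + Ts k * \<delta> (Ts k) * (C * norm x0)"
        proof -
          have a1: "t k + Ts k \<le> \<tau>" using tk1 tS by simp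
          have a2: "\<forall>s\<in>{t k..t k + Ts k}. norm (z s) \<le> C * norm x0"
            using zC t0[of k] tk1 tS[of k] by auto
          show ?thesis
            using stH[rule_format, where T="Ts k" and y="dt_traj Fb x0 Ts k" and z=z and xx=x0 and \<tau>=\<tau> and a="t k" and P="C * norm x0"]
              Tsp(1,2)[of k] s t0[of k] a1 zB a2 e1 by blast
        qed
        also have "Ts k * \<delta> (Ts k) * (C * norm x0) \<le> Ts k * c"
        proof -
          have "\<delta> (Ts k) * (C * norm x0) \<le> \<eta> * (C * norm x0)"
            using T2(2)[OF Tsp(1) Tsp(3)] C0 by (intro mult_right_mono) auto
          thus ?thesis unfolding c_def using Tsp(1)[of k] by (simp add: mult.assoc mult_left_mono)
        qed
        also have "norm (dt_traj Fb x0 Ts k - z (t k)) * (1 + K * Ts k) + Ts k * c \<le> c * (t k + Ts k) * exp (K * (t k + Ts k))"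
          by (rule exp_step[OF c0 _ K t0 IH]) (use Tsp(1)[of k] in simp)
        finally show "norm (dt_traj Fb x0 Ts (Suc k) - z (t (Suc k))) \<le> c * t (Suc k) * exp (K * t (Suc k))"
          by (simp add: tS)
      qed
    qed
    assume tk: "(\<Sum>i<k. Ts i) \<le> \<tau>"
    hence "norm (dt_traj Fb x0 Ts k - z (t k)) \<le> c * t k * exp (K * t k)" using claim unfolding t_def by blast
    also have "\<dots> \<le> \<epsilon>' * norm x0" using cle[of k] tk ebig unfolding t_def by linarith
    also have "\<dots> \<le> \<epsilon> * norm x0" unfolding \<epsilon>'_def by (intro mult_right_mono) auto
    finally show "norm (dt_traj Fb x0 Ts k - z (\<Sum>i<k. Ts i)) \<le> \<epsilon> * norm x0" unfolding t_def .
  qed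
qed

end


lemma dt_traj_shift:
  "dt_traj Fb x0 Ts (p + i) = dt_traj Fb (dt_traj Fb x0 Ts p) (\<lambda>i. Ts (p + i)) i"
  by (induction i) auto

lemma sum_shift:
  fixes Ts :: "nat \<Rightarrow> real"
  shows "(\<Sum>i<p + i'. Ts i) = (\<Sum>i<p. Ts i) + (\<Sum>i<i'. Ts (p + i))"
  by (induction i') (auto simp: algebra_simps)

lemma Phi_shift: "Ts \<in> Phi T \<Longrightarrow> (\<lambda>i. Ts (p + i)) \<in> Phi T"
  unfolding Phi_def by auto

lemma Phi_sum_nonneg: "Ts \<in> Phi T \<Longrightarrow> 0 \<le> (\<Sum>i<k. Ts i)"
  unfolding Phi_def by (auto intro: sum_nonneg less_imp_le)

lemma first_exit:
  fixes Ts :: "nat \<Rightarrow> real"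
  assumes Ts: "Ts \<in> Phi Tst" and Tst: "Tst \<le> 1" and tau: "0 < \<tau>" and k: "\<tau> \<le> (\<Sum>i<k. Ts i)"
  obtains p where "p \<le> k" "0 < p" "\<tau> \<le> (\<Sum>i<p. Ts i)" "(\<Sum>i<p. Ts i) \<le> \<tau> + 1"
proof -
  define p where "p = (LEAST i. \<tau> \<le> (\<Sum>i<i. Ts i))"
  have p1: "\<tau> \<le> (\<Sum>i<p. Ts i)" unfolding p_def by (rule LeastI[of _ k]) (rule k)
  have p2: "p \<le> k" unfolding p_def by (rule Least_le) (rule k)
  have p3: "0 < p" using p1 tau by (cases p) auto
  have "\<not> \<tau> \<le> (\<Sum>i<p - 1. Ts i)" unfolding p_def by (rule not_less_Least) (use p3 p_def in auto)
  moreover have "(\<Sum>i<p. Ts i) = (\<Sum>i<p - 1. Ts i) + Ts (p - 1)"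
    using p3 by (metis Suc_diff_1 sum.lessThan_Suc)
  moreover have "Ts (p - 1) < 1"
  proof -
    have "Ts (p - 1) < Tst" using Ts unfolding Phi_def by blast
    thus ?thesis using Tst by simp
  qed
  ultimately have "(\<Sum>i<p. Ts i) \<le> \<tau> + 1" by linarith
  thus ?thesis using that p1 p2 p3 by blast
qed

lemma window_lin:
  fixes Fb :: "'a::real_normed_vector \<Rightarrow> real \<Rightarrow> 'a"
  assumes c: "0 \<le> c" and tau: "0 < \<tau>" and Tst: "Tst \<le> 1"
    and W: "\<And>Ts y k. Ts \<in> Phi Tst \<Longrightarrow> norm y \<le> R \<Longrightarrow> (\<Sum>i<k. Ts i) \<le> \<tau> + 1 \<Longrightarrow>
        norm (dt_traj Fb y Ts k) \<le> c * norm y \<and> (\<tau> \<le> (\<Sum>i<k. Ts i) \<longrightarrow> norm (dt_traj Fb y Ts k) \<le> norm y / 2)"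
  shows "\<And>Ts x0 k. Ts \<in> Phi Tst \<Longrightarrow> norm x0 \<le> R \<Longrightarrow>
     norm (dt_traj Fb x0 Ts k) \<le> 2 * c * norm x0 * exp (- (ln 2 / (\<tau> + 1)) * (\<Sum>i<k. Ts i))"
proof -
  have claim: "\<forall>Ts x0 j. Ts \<in> Phi Tst \<longrightarrow> norm x0 \<le> R \<longrightarrow> real j * (\<tau> + 1) \<le> (\<Sum>i<k. Ts i) \<longrightarrow>
      norm (dt_traj Fb x0 Ts k) \<le> c * norm x0 / 2 ^ j" for k
  proof (induction k rule: less_induct)
    case (less k)
    show ?case
    proof (intro allI impI)
      fix Ts and x0 :: 'a and j :: nat assume Ts: "Ts \<in> Phi Tst" and x0: "norm x0 \<le> R" and j: "real j * (\<tau> + 1) \<le> (\<Sum>i<k. Ts i)"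
      show "norm (dt_traj Fb x0 Ts k) \<le> c * norm x0 / 2 ^ j"
      proof (cases "\<tau> \<le> (\<Sum>i<k. Ts i)")
        case False
        hence "real j * (\<tau> + 1) < \<tau> + 1" using j by linarith
        have "j = 0"
        proof (rule ccontr)
          assume "j \<noteq> 0"
          hence "1 \<le> real j" by simp
          hence "1 * (\<tau> + 1) \<le> real j * (\<tau> + 1)" by (intro mult_right_mono) (use tau in auto)
          thus False using \<open>real j * (\<tau> + 1) < \<tau> + 1\<close> by simp
        qed
        thus ?thesis using W[OF Ts x0, of k] False by simp
      next
        case True
        obtain p where p: "p \<le> k" "0 < p" "\<tau> \<le> (\<Sum>i<p. Ts i)" "(\<Sum>i<p. Ts i) \<le> \<tau> + 1"
          using first_exit[OF Ts Tst tau True] by blast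
        have Wp: "norm (dt_traj Fb x0 Ts p) \<le> norm x0 / 2" using W[OF Ts x0 p(4)] p(3) by blast
        define y where "y = dt_traj Fb x0 Ts p"
        define Ts' where "Ts' = (\<lambda>i. Ts (p + i))"
        have Ts': "Ts' \<in> Phi Tst" unfolding Ts'_def by (rule Phi_shift[OF Ts])
        have yR: "norm y \<le> R" unfolding y_def using Wp x0 norm_ge_zero[of "dt_traj Fb x0 Ts p"] by linarith
        have kk: "k = p + (k - p)" using p by simp
        have traj: "dt_traj Fb x0 Ts k = dt_traj Fb y Ts' (k - p)"
          unfolding y_def Ts'_def by (subst kk) (rule dt_traj_shift)
        have sums: "(\<Sum>i<k. Ts i) = (\<Sum>i<p. Ts i) + (\<Sum>i<k - p. Ts' i)"
          unfolding Ts'_def by (subst kk) (rule sum_shift)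
        have lt: "k - p < k" using p by simp
        show ?thesis
        proof (cases j)
          case 0
          have "norm (dt_traj Fb y Ts' (k - p)) \<le> c * norm y / 2 ^ 0"
            using less.IH[OF lt, rule_format, OF Ts' yR, of 0] Phi_sum_nonneg[OF Ts', of "k - p"] by simp
          also have "\<dots> \<le> c * norm x0"
          proof -
            have "norm y \<le> norm x0" using Wp norm_ge_zero[of y] unfolding y_def by linarith
            thus ?thesis using c by (simp add: mult_left_mono)
          qed
          finally show ?thesis using 0 traj by simp
        next
          case (Suc j')
          have "real j' * (\<tau> + 1) \<le> (\<Sum>i<k - p. Ts' i)"
            using j sums p(4) Suc by (simp add: algebra_simps)
          hence "norm (dt_traj Fb y Ts' (k - p)) \<le> c * norm y / 2 ^ j'"
            using less.IH[OF lt, rule_format, OF Ts' yR] by blast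
          also have "\<dots> \<le> c * (norm x0 / 2) / 2 ^ j'" using Wp c unfolding y_def
            by (intro divide_right_mono mult_left_mono) auto
          also have "\<dots> = c * norm x0 / 2 ^ j" using Suc by simp
          finally show ?thesis using traj by simp
        qed
      qed
    qed
  qed
  fix Ts and x0 :: 'a and k :: nat assume Ts: "Ts \<in> Phi Tst" and x0: "norm x0 \<le> R"
  define t where "t = (\<Sum>i<k. Ts i)"
  have t0: "0 \<le> t" unfolding t_def by (rule Phi_sum_nonneg[OF Ts])
  define j where "j = nat \<lfloor>t / (\<tau> + 1)\<rfloor>"
  have jle: "real j * (\<tau> + 1) \<le> t"
  proof -
    have "real j \<le> t / (\<tau> + 1)" unfolding j_def using t0 tau by simp
    thus ?thesis using tau by (simp add: field_simps)
  qed
  have jgt: "t / (\<tau> + 1) - 1 \<le> real j" unfolding j_def using t0 tau by linarith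
  have "norm (dt_traj Fb x0 Ts k) \<le> c * norm x0 / 2 ^ j" using claim[rule_format, OF Ts x0] jle unfolding t_def by blast
  also have "1 / (2::real) ^ j \<le> 2 * exp (- (ln 2 / (\<tau> + 1)) * t)"
  proof -
    have "1 / (2::real) ^ j = exp (- (real j * ln 2))" by (simp add: exp_minus exp_of_nat_mult divide_inverse)
    also have "\<dots> \<le> exp (- ((t / (\<tau> + 1) - 1) * ln 2))" using jgt by (simp add: mult_right_mono)
    also have "\<dots> = 2 * exp (- (ln 2 / (\<tau> + 1)) * t)"
      by (simp add: algebra_simps exp_add exp_diff exp_minus divide_inverse)
    finally show ?thesis .
  qed
  hence "c * norm x0 / 2 ^ j \<le> c * norm x0 * (2 * exp (- (ln 2 / (\<tau> + 1)) * t))"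
    using c by (metis mult_left_mono mult_nonneg_nonneg norm_ge_zero times_divide_eq_right mult_1_right)
  finally show "norm (dt_traj Fb x0 Ts k) \<le> 2 * c * norm x0 * exp (- (ln 2 / (\<tau> + 1)) * (\<Sum>i<k. Ts i))"
    unfolding t_def by (simp add: algebra_simps)
qed



lemma window_sps:
  fixes Fb :: "'a::real_normed_vector \<Rightarrow> real \<Rightarrow> 'a"
  assumes tau: "0 < \<tau>" and Tst: "Tst \<le> 1"
    and W1: "\<And>Ts y k. Ts \<in> Phi Tst \<Longrightarrow> norm y \<le> M \<Longrightarrow> (\<Sum>i<k. Ts i) \<le> \<tau> + 1 \<Longrightarrow>
        norm (dt_traj Fb y Ts k) \<le> \<beta> (norm y) (\<Sum>i<k. Ts i) + R \<and> (\<tau> \<le> (\<Sum>i<k. Ts i) \<longrightarrow> norm (dt_traj Fb y Ts k) \<le> \<nu>)"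
    and W2: "\<And>Ts y k. Ts \<in> Phi Tst \<Longrightarrow> norm y \<le> \<nu> \<Longrightarrow> (\<Sum>i<k. Ts i) \<le> \<tau> + 1 \<Longrightarrow>
        norm (dt_traj Fb y Ts k) \<le> R \<and> (\<tau> \<le> (\<Sum>i<k. Ts i) \<longrightarrow> norm (dt_traj Fb y Ts k) \<le> \<nu>)"
    and bpos: "\<And>r t. 0 \<le> r \<Longrightarrow> 0 \<le> t \<Longrightarrow> 0 \<le> \<beta> r t"
    and Ts: "Ts \<in> Phi Tst" and x0: "norm x0 \<le> M"
  shows "norm (dt_traj Fb x0 Ts k) \<le> \<beta> (norm x0) (\<Sum>i<k. Ts i) + R"
proof -
  have inv: "\<forall>Ts y. Ts \<in> Phi Tst \<longrightarrow> norm y \<le> \<nu> \<longrightarrow> norm (dt_traj Fb y Ts k) \<le> R" for k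
  proof (induction k rule: less_induct)
    case (less k)
    show ?case
    proof (intro allI impI)
      fix Ts and y :: 'a assume Ts: "Ts \<in> Phi Tst" and y: "norm y \<le> \<nu>"
      show "norm (dt_traj Fb y Ts k) \<le> R"
      proof (cases "\<tau> \<le> (\<Sum>i<k. Ts i)")
        case False thus ?thesis using W2[OF Ts y, of k] by simp
      next
        case True
        obtain p where p: "p \<le> k" "0 < p" "\<tau> \<le> (\<Sum>i<p. Ts i)" "(\<Sum>i<p. Ts i) \<le> \<tau> + 1"
          using first_exit[OF Ts Tst tau True] by blast
        have yp: "norm (dt_traj Fb y Ts p) \<le> \<nu>" using W2[OF Ts y p(4)] p(3) by blast
        have kk: "k = p + (k - p)" using p by simp
        have traj: "dt_traj Fb y Ts k = dt_traj Fb (dt_traj Fb y Ts p) (\<lambda>i. Ts (p + i)) (k - p)"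
          by (subst kk) (rule dt_traj_shift)
        have lt: "k - p < k" using p by simp
        show ?thesis using less.IH[OF lt, rule_format, OF Phi_shift[OF Ts] yp] traj by simp
      qed
    qed
  qed
  show ?thesis
  proof (cases "\<tau> \<le> (\<Sum>i<k. Ts i)")
    case False thus ?thesis using W1[OF Ts x0, of k] by simp
  next
    case True
    obtain p where p: "p \<le> k" "0 < p" "\<tau> \<le> (\<Sum>i<p. Ts i)" "(\<Sum>i<p. Ts i) \<le> \<tau> + 1"
      using first_exit[OF Ts Tst tau True] by blast
    have yp: "norm (dt_traj Fb x0 Ts p) \<le> \<nu>" using W1[OF Ts x0 p(4)] p(3) by blast
    have kk: "k = p + (k - p)" using p by simp
    have traj: "dt_traj Fb x0 Ts k = dt_traj Fb (dt_traj Fb x0 Ts p) (\<lambda>i. Ts (p + i)) (k - p)"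
      by (subst kk) (rule dt_traj_shift)
    have "norm (dt_traj Fb x0 Ts k) \<le> R" using inv[rule_format, OF Phi_shift[OF Ts] yp] traj by simp
    moreover have "0 \<le> \<beta> (norm x0) (\<Sum>i<k. Ts i)" using bpos Phi_sum_nonneg[OF Ts] by simp
    ultimately show ?thesis by linarith
  qed
qed

context sys begin

lemma ct_sol_sol: "ct_sol h x z \<Longrightarrow> 0 \<le> T \<Longrightarrow> sol h x T z"
  unfolding ct_sol_def sol_def by (auto intro: continuous_on_subset)

lemma lin_CT_DT:
  assumes K: "K \<ge> 1" and R: "R \<ge> 0" and lam: "lam > 0"
    and ct: "\<And>x0. norm x0 \<le> R \<Longrightarrow> \<exists>z. ct_sol h x0 z \<and> (\<forall>t\<ge>0. norm (z t) \<le> K * norm x0 * exp (- lam * t))"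
  shows "\<exists>Tst>0. \<forall>Ts\<in>Phi Tst. \<forall>x0. norm x0 \<le> R \<longrightarrow> (\<forall>k. norm (dt_traj Fb x0 Ts k) \<le>
     2 * (K + 1) * norm x0 * exp (- (ln 2 / (ln (4 * K) / lam + 1)) * (\<Sum>i<k. Ts i)))"
proof -
  define \<tau> where "\<tau> = ln (4 * K) / lam"
  have tau: "\<tau> > 0" unfolding \<tau>_def using K lam by simp
  have decay: "K * exp (- lam * t) \<le> 1/4" if "\<tau> \<le> t" for t
  proof -
    have "ln (4 * K) \<le> lam * t" using that lam unfolding \<tau>_def by (simp add: field_simps)
    hence "exp (ln (4 * K)) \<le> exp (lam * t)" by simp
    hence "4 * K \<le> exp (lam * t)" using K by simp
    thus ?thesis using K by (simp add: exp_minus field_simps)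
  qed
  obtain T0 where T0: "T0 > 0" and cl: "\<forall>Ts\<in>Phi T0. \<forall>x0 z. sol h x0 (\<tau>+1) z \<and> (\<forall>s\<in>{0..\<tau>+1}. norm (z s) \<le> K * R) \<longrightarrow>
     (\<forall>k. (\<Sum>i<k. Ts i) \<le> \<tau>+1 \<longrightarrow> norm (dt_traj Fb x0 Ts k - z (\<Sum>i<k. Ts i)) \<le> (1/4) * norm x0)"
    using CL[of "K * R" "\<tau> + 1" "1/4"] K R tau by auto
  define Tst where "Tst = min T0 1"
  have Tst: "Tst > 0" "Tst \<le> 1" unfolding Tst_def using T0 by auto
  have PhiT: "Ts \<in> Phi Tst \<Longrightarrow> Ts \<in> Phi T0" for Ts unfolding Phi_def Tst_def by auto
  have W: "norm (dt_traj Fb y Ts k) \<le> (K + 1) * norm y \<and> (\<tau> \<le> (\<Sum>i<k. Ts i) \<longrightarrow> norm (dt_traj Fb y Ts k) \<le> norm y / 2)"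
    if Ts: "Ts \<in> Phi Tst" and y: "norm y \<le> R" and k: "(\<Sum>i<k. Ts i) \<le> \<tau> + 1" for Ts y k
  proof -
    obtain z where z: "ct_sol h y z" "\<forall>t\<ge>0. norm (z t) \<le> K * norm y * exp (- lam * t)" using ct[OF y] by blast
    have zb: "norm (z t) \<le> K * norm y" if "0 \<le> t" for t
    proof -
      have "norm (z t) \<le> K * norm y * exp (- lam * t)" using z(2) that by blast
      also have "\<dots> \<le> K * norm y * 1" using K lam that by (intro mult_left_mono) auto
      finally show ?thesis by simp
    qed
    have zB: "\<forall>s\<in>{0..\<tau>+1}. norm (z s) \<le> K * R"
    proof
      fix s assume "s \<in> {0..\<tau>+1}"
      hence "norm (z s) \<le> K * norm y" using zb by auto
      also have "\<dots> \<le> K * R" using y K by (intro mult_left_mono) auto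
      finally show "norm (z s) \<le> K * R" .
    qed
    have t0: "0 \<le> (\<Sum>i<k. Ts i)" by (rule Phi_sum_nonneg[OF Ts])
    have close: "norm (dt_traj Fb y Ts k - z (\<Sum>i<k. Ts i)) \<le> (1/4) * norm y"
      using cl[rule_format, OF PhiT[OF Ts], of y z k] ct_sol_sol[OF z(1), of "\<tau>+1"] tau zB k by auto
    have tri: "norm (dt_traj Fb y Ts k) \<le> norm (z (\<Sum>i<k. Ts i)) + (1/4) * norm y"
      using close norm_triangle_sub[of "dt_traj Fb y Ts k" "z (\<Sum>i<k. Ts i)"] by linarith
    show ?thesis
    proof
      have "(K + 1) * norm y = K * norm y + norm y" by (simp add: algebra_simps)
      thus "norm (dt_traj Fb y Ts k) \<le> (K + 1) * norm y" using tri zb[OF t0] norm_ge_zero[of y] by linarith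
      show "\<tau> \<le> (\<Sum>i<k. Ts i) \<longrightarrow> norm (dt_traj Fb y Ts k) \<le> norm y / 2"
      proof
        assume "\<tau> \<le> (\<Sum>i<k. Ts i)"
        hence "K * exp (- lam * (\<Sum>i<k. Ts i)) \<le> 1/4" by (rule decay)
        hence "K * exp (- lam * (\<Sum>i<k. Ts i)) * norm y \<le> 1/4 * norm y" by (intro mult_right_mono) auto
        moreover have "norm (z (\<Sum>i<k. Ts i)) \<le> K * norm y * exp (- lam * (\<Sum>i<k. Ts i))" using z(2) t0 by blast
        ultimately show "norm (dt_traj Fb y Ts k) \<le> norm y / 2" using tri by (simp add: algebra_simps)
      qed
    qed
  qed
  have main: "norm (dt_traj Fb x0 Ts k) \<le> 2 * (K + 1) * norm x0 * exp (- (ln 2 / (\<tau> + 1)) * (\<Sum>i<k. Ts i))"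
    if "Ts \<in> Phi Tst" "norm x0 \<le> R" for Ts x0 k
    by (rule window_lin[of "K+1" \<tau> Tst R Fb, OF _ tau Tst(2) W that]) (use K in auto)
  show ?thesis using main Tst unfolding \<tau>_def by blast
qed

lemma LES_to_DT:
  assumes "LES h"
  shows "LES_VSR Fb"
proof -
  obtain K R lam where K: "K \<ge> 1" and R: "R > 0" and lam: "lam > 0"
    and ct: "\<And>x0. norm x0 \<le> R \<Longrightarrow> \<exists>z. ct_sol h x0 z \<and> (\<forall>t\<ge>0. norm (z t) \<le> K * norm x0 * exp (- lam * t))"
    using assms unfolding LES_def by blast
  obtain Tst where Tst: "Tst > 0" and main: "\<forall>Ts\<in>Phi Tst. \<forall>x0. norm x0 \<le> R \<longrightarrow> (\<forall>k. norm (dt_traj Fb x0 Ts k) \<le>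
     2 * (K + 1) * norm x0 * exp (- (ln 2 / (ln (4 * K) / lam + 1)) * (\<Sum>i<k. Ts i)))"
    using lin_CT_DT[of K R lam, OF K _ lam ct] R by auto
  have pos: "ln 2 / (ln (4 * K) / lam + 1) > 0" using K lam by (simp add: add_pos_nonneg)
  show ?thesis unfolding LES_VSR_def
    using K R Tst pos main by (intro exI[of _ "2 * (K + 1)"] conjI exI[of _ R] exI[of _ Tst] exI[of _ "ln 2 / (ln (4 * K) / lam + 1)"]) auto
qed

lemma GES_to_DT:
  assumes "GES h"
  shows "SES_VSR Fb"
proof -
  obtain K lam where K: "K \<ge> 1" and lam: "lam > 0"
    and ct: "\<And>x0. \<exists>z. ct_sol h x0 z \<and> (\<forall>t\<ge>0. norm (z t) \<le> K * norm x0 * exp (- lam * t))"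
    using assms unfolding GES_def by blast
  have pos: "ln 2 / (ln (4 * K) / lam + 1) > 0" using K lam by (simp add: add_pos_nonneg)
  have "\<forall>M\<ge>0. \<exists>Tst>0. \<forall>Ts\<in>Phi Tst. \<forall>x0. norm x0 \<le> M \<longrightarrow> (\<forall>k. norm (dt_traj Fb x0 Ts k) \<le>
     2 * (K + 1) * norm x0 * exp (- (ln 2 / (ln (4 * K) / lam + 1)) * (\<Sum>i<k. Ts i)))"
  proof (intro allI impI)
    fix M :: real assume M: "0 \<le> M"
    show "\<exists>Tst>0. \<forall>Ts\<in>Phi Tst. \<forall>x0. norm x0 \<le> M \<longrightarrow> (\<forall>k. norm (dt_traj Fb x0 Ts k) \<le>
     2 * (K + 1) * norm x0 * exp (- (ln 2 / (ln (4 * K) / lam + 1)) * (\<Sum>i<k. Ts i)))"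
      by (rule lin_CT_DT[of K M lam, OF K M lam ct])
  qed
  thus ?thesis unfolding SES_VSR_def
    using K pos by (intro exI[of _ "2 * (K + 1)"] conjI exI[of _ "ln 2 / (ln (4 * K) / lam + 1)"]) auto
qed

end


lemma KL_nonneg: "class_KL \<beta> \<Longrightarrow> 0 \<le> r \<Longrightarrow> 0 \<le> t \<Longrightarrow> 0 \<le> \<beta> r t"
  unfolding class_KL_def using classK_nonneg by blast

lemma KL_mono_r:
  assumes "class_KL \<beta>" "0 \<le> r" "r \<le> r'" "0 \<le> t"
  shows "\<beta> r t \<le> \<beta> r' t"
proof (cases "r = r'")
  case False
  have "strict_mono_on {0..} (\<lambda>r. \<beta> r t)" using assms unfolding class_KL_def class_K_def by blast
  hence "\<beta> r t < \<beta> r' t" using assms False by (intro strict_mono_onD[of "{0..}" "\<lambda>r. \<beta> r t"]) auto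
  thus ?thesis by simp
qed simp

lemma KL_mono_t:
  assumes "class_KL \<beta>" "0 \<le> r" "0 \<le> t" "t \<le> t'"
  shows "\<beta> r t' \<le> \<beta> r t"
proof -
  have "antimono_on {0..} (\<lambda>t. \<beta> r t)" using assms unfolding class_KL_def by blast
  thus ?thesis using assms by (auto intro: monotone_onD)
qed

lemma KL_lim:
  assumes "class_KL \<beta>" "0 \<le> r" "0 < e"
  shows "\<exists>\<tau>0. \<forall>t\<ge>\<tau>0. \<beta> r t < e"
proof -
  have "((\<lambda>t. \<beta> r t) \<longlongrightarrow> 0) at_top" using assms unfolding class_KL_def by blast
  hence "eventually (\<lambda>t. dist (\<beta> r t) 0 < e) at_top" using assms(3) tendstoD by blast
  then obtain \<tau>0 where "\<forall>t\<ge>\<tau>0. dist (\<beta> r t) 0 < e" unfolding eventually_at_top_linorder by blast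
  thus ?thesis by (intro exI[of _ \<tau>0]) (auto simp: dist_real_def abs_less_iff)
qed

context sys begin

lemma GAS_to_DT:
  assumes "GAS h"
  shows "SPS_VSR Fb"
proof -
  obtain \<beta> where KL: "class_KL \<beta>" and ct: "\<And>x0. \<exists>z. ct_sol h x0 z \<and> (\<forall>t\<ge>0. norm (z t) \<le> \<beta> (norm x0) t)"
    using assms unfolding GAS_def by blast
  have "\<forall>M\<ge>0. \<forall>R>0. \<exists>Tst>0. \<forall>Ts\<in>Phi Tst. \<forall>x0. norm x0 \<le> M \<longrightarrow>
        (\<forall>k. norm (dt_traj Fb x0 Ts k) \<le> \<beta> (norm x0) (\<Sum>i<k. Ts i) + R)"
  proof (intro allI impI)
    fix M R :: real assume M: "0 \<le> M" and R: "0 < R"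
    have K0: "class_K (\<lambda>r. \<beta> r 0)" using KL unfolding class_KL_def by auto
    obtain d where d: "d > 0" "\<And>r. 0 \<le> r \<Longrightarrow> r < d \<Longrightarrow> \<beta> r 0 < R / 2"
      using classK_small[OF K0, of "R/2"] R by auto
    define \<nu> where "\<nu> = min (d/2) (R/2)"
    have nu: "\<nu> > 0" "\<nu> \<le> R / 2" "\<beta> \<nu> 0 < R / 2" unfolding \<nu>_def using d R by auto
    define M' where "M' = max M \<nu>"
    have M': "M \<le> M'" "\<nu> \<le> M'" "0 \<le> M'" unfolding M'_def using M by auto
    define B where "B = \<beta> M' 0"
    have B0: "0 \<le> B" unfolding B_def using KL_nonneg[OF KL M'(3)] by simp
    obtain \<tau>0 where tau0: "\<forall>t\<ge>\<tau>0. \<beta> M' t < \<nu> / 2" using KL_lim[OF KL M'(3), of "\<nu>/2"] nu by auto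
    define \<tau> where "\<tau> = max \<tau>0 1"
    have tau: "\<tau> > 0" "\<tau> \<ge> \<tau>0" unfolding \<tau>_def by auto
    define \<epsilon> where "\<epsilon> = \<nu> / (2 * (M' + 1))"
    have eps: "\<epsilon> > 0" unfolding \<epsilon>_def using nu M' by simp
    obtain T0 where T0: "T0 > 0" and cl: "\<forall>Ts\<in>Phi T0. \<forall>x0 z. sol h x0 (\<tau>+1) z \<and> (\<forall>s\<in>{0..\<tau>+1}. norm (z s) \<le> B) \<longrightarrow>
       (\<forall>k. (\<Sum>i<k. Ts i) \<le> \<tau>+1 \<longrightarrow> norm (dt_traj Fb x0 Ts k - z (\<Sum>i<k. Ts i)) \<le> \<epsilon> * norm x0)"
      using CL[OF B0 _ eps, of "\<tau> + 1"] tau by auto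
    define Tst where "Tst = min T0 1"
    have Tst: "Tst > 0" "Tst \<le> 1" unfolding Tst_def using T0 by auto
    have PhiT: "Ts \<in> Phi Tst \<Longrightarrow> Ts \<in> Phi T0" for Ts unfolding Phi_def Tst_def by auto
    have common: "norm (dt_traj Fb y Ts k) \<le> \<beta> (norm y) (\<Sum>i<k. Ts i) + \<nu> / 2 \<and>
        (\<tau> \<le> (\<Sum>i<k. Ts i) \<longrightarrow> norm (dt_traj Fb y Ts k) \<le> \<nu>)"
      if Ts: "Ts \<in> Phi Tst" and y: "norm y \<le> M'" and k: "(\<Sum>i<k. Ts i) \<le> \<tau> + 1" for Ts y k
    proof -
      obtain z where z: "ct_sol h y z" "\<forall>t\<ge>0. norm (z t) \<le> \<beta> (norm y) t" using ct by blast
      have zB: "\<forall>s\<in>{0..\<tau>+1}. norm (z s) \<le> B"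
      proof
        fix s assume s: "s \<in> {0..\<tau>+1}"
        have "norm (z s) \<le> \<beta> (norm y) s" using z(2) s by auto
        also have "\<dots> \<le> \<beta> (norm y) 0" using KL_mono_t[OF KL, of "norm y" 0 s] s by auto
        also have "\<dots> \<le> \<beta> M' 0" using KL_mono_r[OF KL, of "norm y" M' 0] y by auto
        finally show "norm (z s) \<le> B" unfolding B_def .
      qed
      have t0: "0 \<le> (\<Sum>i<k. Ts i)" by (rule Phi_sum_nonneg[OF Ts])
      have close: "norm (dt_traj Fb y Ts k - z (\<Sum>i<k. Ts i)) \<le> \<epsilon> * norm y"
        using cl[rule_format, OF PhiT[OF Ts], of y z k] ct_sol_sol[OF z(1), of "\<tau>+1"] tau zB k by auto
      have "\<epsilon> * norm y \<le> \<nu> / 2"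
      proof -
        have "\<epsilon> * norm y \<le> \<epsilon> * (M' + 1)" using eps y by (intro mult_left_mono) auto
        also have "\<dots> = \<nu> / 2" unfolding \<epsilon>_def using M' by (simp add: field_simps)
        finally show ?thesis .
      qed
      hence tri: "norm (dt_traj Fb y Ts k) \<le> norm (z (\<Sum>i<k. Ts i)) + \<nu> / 2"
        using close norm_triangle_sub[of "dt_traj Fb y Ts k" "z (\<Sum>i<k. Ts i)"] by linarith
      have zt: "norm (z (\<Sum>i<k. Ts i)) \<le> \<beta> (norm y) (\<Sum>i<k. Ts i)" using z(2) t0 by blast
      show ?thesis
      proof
        show "norm (dt_traj Fb y Ts k) \<le> \<beta> (norm y) (\<Sum>i<k. Ts i) + \<nu> / 2" using tri zt by linarith
        show "\<tau> \<le> (\<Sum>i<k. Ts i) \<longrightarrow> norm (dt_traj Fb y Ts k) \<le> \<nu>"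
        proof
          assume tk: "\<tau> \<le> (\<Sum>i<k. Ts i)"
          have "\<beta> (norm y) (\<Sum>i<k. Ts i) \<le> \<beta> M' (\<Sum>i<k. Ts i)" using KL_mono_r[OF KL _ y t0] by simp
          also have "\<dots> < \<nu> / 2" using tau0 tk tau by auto
          finally show "norm (dt_traj Fb y Ts k) \<le> \<nu>" using tri zt by linarith
        qed
      qed
    qed
    show "\<exists>Tst>0. \<forall>Ts\<in>Phi Tst. \<forall>x0. norm x0 \<le> M \<longrightarrow>
        (\<forall>k. norm (dt_traj Fb x0 Ts k) \<le> \<beta> (norm x0) (\<Sum>i<k. Ts i) + R)"
    proof (intro exI[of _ Tst] conjI ballI allI impI)
      show "Tst > 0" by (rule Tst(1))
      fix Ts and x0 :: "real^'n" and k :: nat assume Ts: "Ts \<in> Phi Tst" and x0: "norm x0 \<le> M"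
      show "norm (dt_traj Fb x0 Ts k) \<le> \<beta> (norm x0) (\<Sum>i<k. Ts i) + R"
      proof (rule window_sps[where \<beta>=\<beta> and R=R and \<nu>=\<nu> and Fb=Fb and M=M, OF tau(1) Tst(2) _ _ _ Ts x0])
        fix Ts' and y :: "real^'n" and k' :: nat assume Ts': "Ts' \<in> Phi Tst" and y: "norm y \<le> M" and k': "(\<Sum>i<k'. Ts' i) \<le> \<tau> + 1"
        have "norm y \<le> M'" using y M' by simp
        from common[OF Ts' this k'] nu
        show "norm (dt_traj Fb y Ts' k') \<le> \<beta> (norm y) (\<Sum>i<k'. Ts' i) + R \<and>
           (\<tau> \<le> (\<Sum>i<k'. Ts' i) \<longrightarrow> norm (dt_traj Fb y Ts' k') \<le> \<nu>)" by auto
      next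
        fix Ts' and y :: "real^'n" and k' :: nat assume Ts': "Ts' \<in> Phi Tst" and y: "norm y \<le> \<nu>" and k': "(\<Sum>i<k'. Ts' i) \<le> \<tau> + 1"
        have yM: "norm y \<le> M'" using y M' by simp
        have "\<beta> (norm y) (\<Sum>i<k'. Ts' i) \<le> \<beta> (norm y) 0"
          using KL_mono_t[OF KL, of "norm y" 0] Phi_sum_nonneg[OF Ts'] by auto
        also have "\<dots> \<le> \<beta> \<nu> 0" using KL_mono_r[OF KL, of "norm y" \<nu> 0] y by auto
        finally have "\<beta> (norm y) (\<Sum>i<k'. Ts' i) < R / 2" using nu by linarith
        with common[OF Ts' yM k'] nu
        show "norm (dt_traj Fb y Ts' k') \<le> R \<and> (\<tau> \<le> (\<Sum>i<k'. Ts' i) \<longrightarrow> norm (dt_traj Fb y Ts' k') \<le> \<nu>)" by auto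
      next
        fix r t :: real assume "0 \<le> r" "0 \<le> t" thus "0 \<le> \<beta> r t" by (rule KL_nonneg[OF KL])
      qed
    qed
  qed
  thus ?thesis unfolding SPS_VSR_def using KL by blast
qed

end


lemma sol_mono: "sol g x T z \<Longrightarrow> T' \<le> T \<Longrightarrow> sol g x T' z"
  unfolding sol_def by (auto intro: continuous_on_subset)

lemma cont_glue:
  fixes Z :: "real \<Rightarrow> 'a::metric_space"
  assumes d: "\<delta> > 0" and c: "\<And>j. continuous_on {0..real j * \<delta>} Z"
  shows "continuous_on {0..} Z"
  unfolding continuous_on_def
proof
  fix x :: real assume x: "x \<in> {0..}"
  define j where "j = nat \<lceil>(x + 1) / \<delta>\<rceil>"
  have "(x + 1) / \<delta> \<le> real j" unfolding j_def by linarith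
  hence xj: "x + 1 \<le> real j * \<delta>" using d by (simp add: field_simps)
  have "(Z \<longlongrightarrow> Z x) (at x within {0..real j * \<delta>})"
    using c[of j] x xj unfolding continuous_on_def by auto
  moreover have "eventually (\<lambda>y. y \<in> {0..real j * \<delta>} \<longleftrightarrow> y \<in> {0..}) (at x)"
    unfolding eventually_at
    by (rule exI[of _ 1]) (use xj in \<open>auto simp: dist_real_def\<close>)
  ultimately show "(Z \<longlongrightarrow> Z x) (at x within {0..})" by (rule Lim_transform_within_set)
qed

context sys begin

lemma apriori:
  assumes s: "sol h x0 t z" and zB: "\<forall>r\<in>{0..t}. norm (z r) \<le> B" and B: "0 \<le> B" and sr: "s \<in> {0..t}"
    and T0: "T0 > 0" and DT: "\<forall>Ts\<in>Phi T0. \<forall>k. norm (dt_traj Fb x0 Ts k) \<le> b (\<Sum>i<k. Ts i)"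
  shows "norm (z s) \<le> b s"
proof (cases "s = 0")
  case True
  have "(\<lambda>i. T0 / 2) \<in> Phi T0" unfolding Phi_def using T0 by auto
  hence "norm x0 \<le> b 0" using DT[rule_format, of "\<lambda>i. T0/2" 0] by simp
  moreover have "z 0 = x0" using sol_at0[OF s] sr by auto
  ultimately show ?thesis using True by simp
next
  case False
  hence s0: "0 < s" and st: "s \<le> t" using sr by auto
  have eps: "norm (z s) \<le> b s + \<eta> * norm x0" if \<eta>: "\<eta> > 0" for \<eta>
  proof -
    obtain Tst where Tst: "Tst > 0" and cl: "\<forall>Ts\<in>Phi Tst. \<forall>x0 z. sol h x0 t z \<and> (\<forall>s\<in>{0..t}. norm (z s) \<le> B) \<longrightarrow>
       (\<forall>k. (\<Sum>i<k. Ts i) \<le> t \<longrightarrow> norm (dt_traj Fb x0 Ts k - z (\<Sum>i<k. Ts i)) \<le> \<eta> * norm x0)"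
      using CL[OF B _ \<eta>, of t] s0 st by auto
    define m where "m = min Tst T0"
    have m: "m > 0" unfolding m_def using Tst T0 by simp
    define N where "N = nat \<lceil>s / m\<rceil> + 1"
    have N: "s / m < real N" unfolding N_def by linarith
    have N0: "real N > 0" unfolding N_def by simp
    define Ts where "Ts = (\<lambda>i::nat. s / real N)"
    have hm: "s / real N < m" using N m N0 s0 by (simp add: field_simps)
    have Ts1: "Ts \<in> Phi Tst" "Ts \<in> Phi T0" unfolding Phi_def Ts_def using hm s0 N0 unfolding m_def by auto
    have sumN: "(\<Sum>i<N. Ts i) = s" unfolding Ts_def using N0 by simp
    have "norm (dt_traj Fb x0 Ts N - z s) \<le> \<eta> * norm x0"
      using cl[rule_format, OF Ts1(1), of x0 z N] s zB st sumN by auto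
    moreover have "norm (dt_traj Fb x0 Ts N) \<le> b s" using DT[rule_format, OF Ts1(2), of N] sumN by simp
    ultimately show ?thesis using norm_triangle_sub[of "z s" "dt_traj Fb x0 Ts N"]
      by (simp add: norm_minus_commute)
  qed
  show ?thesis
  proof (rule ccontr)
    assume "\<not> norm (z s) \<le> b s"
    hence d: "norm (z s) - b s > 0" by simp
    define \<eta> where "\<eta> = (norm (z s) - b s) / (2 * (norm x0 + 1))"
    have "2 * (norm x0 + 1) > 0" by (smt (verit) norm_ge_zero)
    hence \<eta>0: "\<eta> > 0" unfolding \<eta>_def using d by (intro divide_pos_pos)
    have "\<eta> * norm x0 \<le> \<eta> * (norm x0 + 1)" using \<eta>0 by simp
    also have "\<dots> = (norm (z s) - b s) / 2"
    proof -
      have nz: "norm x0 + 1 \<noteq> 0" by (smt (verit) norm_ge_zero)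
      show ?thesis unfolding \<eta>_def using nz by (simp add: field_simps)
    qed
    finally show False using eps[OF \<eta>0] d by argo
  qed
qed

lemma global_sol:
  assumes B: "0 \<le> B" and x0: "norm x0 \<le> B" and bB: "\<forall>s\<ge>0. b s \<le> B"
    and bound: "\<And>t z. 0 \<le> t \<Longrightarrow> sol h x0 t z \<Longrightarrow> (\<forall>s\<in>{0..t}. norm (z s) \<le> B + 1) \<Longrightarrow> (\<forall>s\<in>{0..t}. norm (z s) \<le> b s)"
  shows "\<exists>z. ct_sol h x0 z \<and> (\<forall>s\<ge>0. norm (z s) \<le> b s)"
proof -
  obtain L where L: "L > 0" "\<And>x y. norm x \<le> B + 1 \<Longrightarrow> norm y \<le> B + 1 \<Longrightarrow> norm (h x - h y) \<le> L * norm (x - y)"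
    using loclip_h B unfolding loclip_def by (meson add_nonneg_nonneg zero_le_one)
  define G where "G = L * (B + 1) + 1"
  have G0: "G > 0" unfolding G_def using L B by (simp add: add_pos_nonneg)
  have hG: "norm (h v) \<le> G" if "norm v \<le> B + 1" for v
  proof -
    have "norm (h v) \<le> L * norm v" using L(2)[OF that, of 0] h0 B by simp
    also have "\<dots> \<le> L * (B + 1)" using that L by (simp add: mult_left_mono)
    finally show ?thesis unfolding G_def by simp
  qed
  define \<delta> where "\<delta> = min (1 / G) (1 / (2 * L))"
  have d0: "\<delta> > 0" unfolding \<delta>_def using G0 L by simp
  have dG: "\<delta> * G \<le> 1" "\<delta> * L \<le> 1/2" unfolding \<delta>_def using G0 L by (auto simp: min_def field_simps)
  have local: "\<exists>w. sol h y \<delta> w \<and> (\<forall>s\<in>{0..\<delta>}. norm (w s - y) \<le> 1)" if y: "norm y \<le> B" for y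
  proof -
    have ball: "norm v \<le> B + 1" if "v \<in> cball y 1" for v
      using that y norm_triangle_sub[of v y] by (auto simp: dist_norm norm_minus_commute)
    obtain w where w: "sol h y \<delta> w" "\<forall>s\<in>{0..\<delta>}. norm (w s - y) \<le> G * s"
      using local_existence[OF L(1) G0, of y h \<delta>] L(2) ball hG d0 dG by force
    have "norm (w s - y) \<le> 1" if "s \<in> {0..\<delta>}" for s
    proof -
      have "G * s \<le> G * \<delta>" using that G0 by (intro mult_left_mono) auto
      moreover have "norm (w s - y) \<le> G * s" using w(2) that by blast
      ultimately show ?thesis using dG(1) by (simp add: mult.commute)
    qed
    thus ?thesis using w by blast
  qed
  have claim: "\<exists>z. sol h x0 (real j * \<delta>) z \<and> (\<forall>s\<in>{0..real j * \<delta>}. norm (z s) \<le> b s)" for j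
  proof (induction j)
    case 0
    have s0: "sol h x0 0 (\<lambda>_. x0)" unfolding sol_def by auto
    have "\<forall>s\<in>{0..0}. norm ((\<lambda>_. x0) s) \<le> b s" by (rule bound[OF _ s0]) (use x0 in auto)
    thus ?case using s0 by auto
  next
    case (Suc j)
    then obtain zj where zj: "sol h x0 (real j * \<delta>) zj" "\<forall>s\<in>{0..real j * \<delta>}. norm (zj s) \<le> b s" by blast
    define a where "a = real j * \<delta>"
    have a0: "0 \<le> a" unfolding a_def using d0 by simp
    define y where "y = zj a"
    have yB: "norm y \<le> B"
    proof -
      have "norm (zj a) \<le> b a" using zj(2) a0 unfolding a_def by auto
      thus ?thesis using bB a0 unfolding y_def by force
    qed
    obtain w where w: "sol h y \<delta> w" "\<forall>s\<in>{0..\<delta>}. norm (w s - y) \<le> 1" using local[OF yB] by blast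
    have w0: "w 0 = y" using sol_at0[OF w(1)] d0 by simp
    define Z where "Z s = (if s \<le> a then zj s else w (s - a))" for s
    have aS: "real (Suc j) * \<delta> = a + \<delta>" unfolding a_def by (simp add: algebra_simps)
    have Zc: "continuous_on {0..a + \<delta>} Z"
      unfolding Z_def
    proof (rule continuous_on_cases_le)
      show "continuous_on {x \<in> {0..a + \<delta>}. x \<le> a} zj"
        using zj(1) unfolding sol_def a_def by (rule conjE) (erule continuous_on_subset, auto)
      have "continuous_on {x \<in> {0..a + \<delta>}. a \<le> x} (w \<circ> (\<lambda>s. s - a))"
      proof (rule continuous_on_compose)
        show "continuous_on {x \<in> {0..a + \<delta>}. a \<le> x} (\<lambda>s. s - a)" by (intro continuous_intros)
        show "continuous_on ((\<lambda>s. s - a) ` {x \<in> {0..a + \<delta>}. a \<le> x}) w"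
          using w(1) unfolding sol_def by (auto intro: continuous_on_subset)
      qed
      thus "continuous_on {x \<in> {0..a + \<delta>}. a \<le> x} (\<lambda>s. w (s - a))" by (simp add: o_def)
      show "continuous_on {0..a + \<delta>} (\<lambda>x. x)" by (intro continuous_intros)
      fix x assume "x \<in> {0..a + \<delta>}" "x = a"
      thus "zj x = w (x - a)" using w0 y_def by simp
    qed
    have hZc: "continuous_on {0..a + \<delta>} (\<lambda>r. h (Z r))"
      using continuous_on_compose2[OF loclip_cont[OF loclip_h] Zc, of UNIV] by auto
    have Zsol: "sol h x0 (a + \<delta>) Z"
      unfolding sol_def
    proof (intro conjI ballI Zc)
      fix s assume s: "s \<in> {0..a + \<delta>}"
      show "Z s = x0 + integral {0..s} (\<lambda>r. h (Z r))"
      proof (cases "s \<le> a")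
        case True
        have "integral {0..s} (\<lambda>r. h (Z r)) = integral {0..s} (\<lambda>r. h (zj r))"
          by (rule integral_cong) (use True in \<open>auto simp: Z_def\<close>)
        thus ?thesis using zj(1) s True unfolding sol_def Z_def a_def by auto
      next
        case False
        have sa: "s - a \<in> {0..\<delta>}" using s False by auto
        have e1: "w (s - a) = y + integral {0..s - a} (\<lambda>r. h (w r))" using w(1) sa unfolding sol_def by blast
        have e2: "y = x0 + integral {0..a} (\<lambda>r. h (zj r))" using zj(1) a0 unfolding sol_def y_def a_def by auto
        have e3: "integral {0..a} (\<lambda>r. h (zj r)) = integral {0..a} (\<lambda>r. h (Z r))"
          by (rule integral_cong) (auto simp: Z_def)
        have e4: "integral {0..s - a} (\<lambda>r. h (w r)) = integral {a..s} (\<lambda>r. h (Z r))"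
        proof -
          have "integral {0..s - a} (\<lambda>r. h (w r)) = integral {0..s - a} ((\<lambda>r. h (w (r - a))) \<circ> (+) a)"
            by (simp add: o_def)
          also have "\<dots> = integral {0 + a..s - a + a} (\<lambda>r. h (w (r - a)))" by (rule integral_shift_Icc_real)
          also have "\<dots> = integral {a..s} (\<lambda>r. h (w (r - a)))" by simp
          also have "\<dots> = integral {a..s} (\<lambda>r. h (Z r))"
            by (rule integral_cong) (auto simp: Z_def w0 y_def)
          finally show ?thesis .
        qed
        have e5: "integral {0..a} (\<lambda>r. h (Z r)) + integral {a..s} (\<lambda>r. h (Z r)) = integral {0..s} (\<lambda>r. h (Z r))"
          using False s a0
          by (intro Henstock_Kurzweil_Integration.integral_combine integrable_continuous_real
              continuous_on_subset[OF hZc]) auto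
        show ?thesis using False e1 e2 e3 e4 e5 by (simp add: Z_def)
      qed
    qed
    have ZB: "\<forall>s\<in>{0..a + \<delta>}. norm (Z s) \<le> B + 1"
    proof
      fix s assume s: "s \<in> {0..a + \<delta>}"
      show "norm (Z s) \<le> B + 1"
      proof (cases "s \<le> a")
        case True
        hence "norm (zj s) \<le> b s" using zj(2) s unfolding a_def by auto
        thus ?thesis using True bB s by (force simp: Z_def)
      next
        case False
        hence "norm (w (s - a) - y) \<le> 1" using w(2) s by auto
        hence "norm (w (s - a)) \<le> B + 1" using yB norm_triangle_sub[of "w (s - a)" y] by linarith
        thus ?thesis using False by (simp add: Z_def)
      qed
    qed
    have "\<forall>s\<in>{0..a + \<delta>}. norm (Z s) \<le> b s" by (rule bound[OF _ Zsol ZB]) (use a0 d0 in auto)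
    thus ?case using Zsol aS by auto
  qed
  obtain F where F: "\<And>j. sol h x0 (real j * \<delta>) (F j)" "\<And>j. \<forall>s\<in>{0..real j * \<delta>}. norm (F j s) \<le> b s"
    using claim by metis
  have agree: "F j s = F j' s" if "s \<in> {0..real j * \<delta>}" "s \<in> {0..real j' * \<delta>}" for j j' s
  proof -
    define m where "m = min (real j * \<delta>) (real j' * \<delta>)"
    have "sol h x0 m (F j)" "sol h x0 m (F j')" unfolding m_def by (auto intro: sol_mono[OF F(1)])
    thus ?thesis using sol_unique[OF loclip_h] that unfolding m_def by auto
  qed
  define J where "J s = nat \<lceil>s / \<delta>\<rceil>" for s
  have J: "s \<le> real (J s) * \<delta>" if "0 \<le> s" for s
  proof -
    have "s / \<delta> \<le> real (J s)" unfolding J_def by linarith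
    thus ?thesis using d0 by (simp add: field_simps)
  qed
  define Zg where "Zg s = F (J s) s" for s
  have Zg: "Zg s = F j s" if "s \<in> {0..real j * \<delta>}" for j s
    unfolding Zg_def using agree[of s "J s" j] that J[of s] by auto
  have "ct_sol h x0 Zg"
    unfolding ct_sol_def
  proof (intro conjI allI impI)
    show "continuous_on {0..} Zg"
    proof (rule cont_glue[OF d0])
      fix j
      have "continuous_on {0..real j * \<delta>} (F j)" using F(1)[of j] unfolding sol_def by blast
      thus "continuous_on {0..real j * \<delta>} Zg" by (rule continuous_on_eq) (use Zg in auto)
    qed
    fix t :: real assume t: "0 \<le> t"
    have tJ: "t \<in> {0..real (J t) * \<delta>}" using J[OF t] t by auto
    have "Zg t = x0 + integral {0..t} (\<lambda>s. h (F (J t) s))" using F(1)[of "J t"] tJ Zg[OF tJ] unfolding sol_def by auto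
    also have "integral {0..t} (\<lambda>s. h (F (J t) s)) = integral {0..t} (\<lambda>s. h (Zg s))"
    proof (rule integral_cong)
      fix x assume "x \<in> {0..t}"
      hence "x \<in> {0..real (J t) * \<delta>}" using tJ by auto
      thus "h (F (J t) x) = h (Zg x)" using Zg[of x "J t"] by simp
    qed
    finally show "Zg t = x0 + integral {0..t} (\<lambda>s. h (Zg s))" .
  qed
  moreover have "norm (Zg s) \<le> b s" if "0 \<le> s" for s
    using F(2)[of "J s"] J[OF that] that unfolding Zg_def by auto
  ultimately show ?thesis by blast
qed

end


context sys begin

lemma lin_DT_CT:
  assumes K: "K \<ge> 1" and Tst: "Tst > 0"
    and DT: "\<forall>Ts\<in>Phi Tst. \<forall>k. norm (dt_traj Fb x0 Ts k) \<le> K * norm x0 * exp (- lam * (\<Sum>i<k. Ts i))"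
    and lam: "lam > 0"
  shows "\<exists>z. ct_sol h x0 z \<and> (\<forall>t\<ge>0. norm (z t) \<le> K * norm x0 * exp (- lam * t))"
proof (rule global_sol[of "K * norm x0"])
  show "0 \<le> K * norm x0" using K by simp
  show "norm x0 \<le> K * norm x0" using K by (simp add: mult_right_mono[of 1 K, simplified])
  show "\<forall>s\<ge>0. K * norm x0 * exp (- lam * s) \<le> K * norm x0"
  proof (intro allI impI)
    fix s :: real assume "0 \<le> s"
    hence "exp (- lam * s) \<le> 1" using lam by simp
    thus "K * norm x0 * exp (- lam * s) \<le> K * norm x0" using K by (simp add: mult_left_le)
  qed
  fix t z assume t: "0 \<le> t" and s: "sol h x0 t z" and zB: "\<forall>s\<in>{0..t}. norm (z s) \<le> K * norm x0 + 1"
  show "\<forall>s\<in>{0..t}. norm (z s) \<le> K * norm x0 * exp (- lam * s)"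
  proof
    fix s assume "s \<in> {0..t}"
    show "norm (z s) \<le> K * norm x0 * exp (- lam * s)"
      by (rule apriori[OF s zB _ \<open>s \<in> {0..t}\<close> Tst, where b="\<lambda>s. K * norm x0 * exp (- lam * s)"])
         (use K DT in auto)
  qed
qed

lemma LES_from_DT:
  assumes "LES_VSR Fb"
  shows "LES h"
proof -
  obtain K R Tst lam where K: "K \<ge> 1" and R: "R > 0" and Tst: "Tst > 0" and lam: "lam > 0"
    and DT: "\<forall>Ts\<in>Phi Tst. \<forall>x0. norm x0 \<le> R \<longrightarrow> (\<forall>k. norm (dt_traj Fb x0 Ts k) \<le> K * norm x0 * exp (- lam * (\<Sum>i<k. Ts i)))"
    using assms unfolding LES_VSR_def by blast
  have "\<forall>x0. norm x0 \<le> R \<longrightarrow> (\<exists>z. ct_sol h x0 z \<and> (\<forall>t\<ge>0. norm (z t) \<le> K * norm x0 * exp (- lam * t)))"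
    using lin_DT_CT[OF K Tst _ lam] DT by blast
  thus ?thesis unfolding LES_def using K R lam by blast
qed

lemma GES_from_DT:
  assumes "SES_VSR Fb"
  shows "GES h"
proof -
  obtain K lam where K: "K \<ge> 1" and lam: "lam > 0"
    and DT: "\<forall>M\<ge>0. \<exists>Tst>0. \<forall>Ts\<in>Phi Tst. \<forall>x0. norm x0 \<le> M \<longrightarrow> (\<forall>k. norm (dt_traj Fb x0 Ts k) \<le> K * norm x0 * exp (- lam * (\<Sum>i<k. Ts i)))"
    using assms unfolding SES_VSR_def by blast
  have "\<exists>z. ct_sol h x0 z \<and> (\<forall>t\<ge>0. norm (z t) \<le> K * norm x0 * exp (- lam * t))" for x0
  proof -
    obtain Tst where Tst: "Tst > 0" and D: "\<forall>Ts\<in>Phi Tst. \<forall>x. norm x \<le> norm x0 \<longrightarrow> (\<forall>k. norm (dt_traj Fb x Ts k) \<le> K * norm x * exp (- lam * (\<Sum>i<k. Ts i)))"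
      using DT[rule_format, of "norm x0"] by auto
    show ?thesis using lin_DT_CT[OF K Tst _ lam] D by blast
  qed
  thus ?thesis unfolding GES_def using K lam by blast
qed

lemma GAS_from_DT:
  assumes "SPS_VSR Fb"
  shows "GAS h"
proof -
  obtain \<beta> where KL: "class_KL \<beta>" and DT: "\<forall>M\<ge>0. \<forall>R>0. \<exists>Tst>0. \<forall>Ts\<in>Phi Tst. \<forall>x0. norm x0 \<le> M \<longrightarrow>
        (\<forall>k. norm (dt_traj Fb x0 Ts k) \<le> \<beta> (norm x0) (\<Sum>i<k. Ts i) + R)"
    using assms unfolding SPS_VSR_def by blast
  have "\<exists>z. ct_sol h x0 z \<and> (\<forall>t\<ge>0. norm (z t) \<le> \<beta> (norm x0) t)" for x0
  proof -
    have DTx: "\<exists>Tst>0. \<forall>Ts\<in>Phi Tst. \<forall>k. norm (dt_traj Fb x0 Ts k) \<le> \<beta> (norm x0) (\<Sum>i<k. Ts i) + R" if "R > 0" for R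
      using DT[rule_format, of "norm x0" R] that by fastforce
    have x0b: "norm x0 \<le> \<beta> (norm x0) 0"
    proof (rule field_le_epsilon)
      fix R :: real assume R: "0 < R"
      obtain Tst where Tst: "Tst > 0" "\<forall>Ts\<in>Phi Tst. \<forall>k. norm (dt_traj Fb x0 Ts k) \<le> \<beta> (norm x0) (\<Sum>i<k. Ts i) + R"
        using DTx[OF R] by blast
      have "(\<lambda>i. Tst / 2) \<in> Phi Tst" unfolding Phi_def using Tst by auto
      from Tst(2)[rule_format, OF this, of 0] show "norm x0 \<le> \<beta> (norm x0) 0 + R" by simp
    qed
    show ?thesis
    proof (rule global_sol[of "\<beta> (norm x0) 0"])
      show "0 \<le> \<beta> (norm x0) 0" by (rule KL_nonneg[OF KL]) auto
      show "norm x0 \<le> \<beta> (norm x0) 0" by (rule x0b)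
      show "\<forall>s\<ge>0. \<beta> (norm x0) s \<le> \<beta> (norm x0) 0" using KL_mono_t[OF KL] by auto
      fix t z assume t: "0 \<le> t" and s: "sol h x0 t z" and zB: "\<forall>s\<in>{0..t}. norm (z s) \<le> \<beta> (norm x0) 0 + 1"
      have B1: "0 \<le> \<beta> (norm x0) 0 + 1" using KL_nonneg[OF KL, of "norm x0" 0] by simp
      show "\<forall>s\<in>{0..t}. norm (z s) \<le> \<beta> (norm x0) s"
      proof
        fix s assume sr: "s \<in> {0..t}"
        show "norm (z s) \<le> \<beta> (norm x0) s"
        proof (rule field_le_epsilon)
          fix R :: real assume R: "0 < R"
          obtain Tst where Tst: "Tst > 0" "\<forall>Ts\<in>Phi Tst. \<forall>k. norm (dt_traj Fb x0 Ts k) \<le> \<beta> (norm x0) (\<Sum>i<k. Ts i) + R"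
            using DTx[OF R] by blast
          show "norm (z s) \<le> \<beta> (norm x0) s + R"
            by (rule apriori[OF s zB B1 sr Tst(1), where b="\<lambda>s. \<beta> (norm x0) s + R"]) (use Tst(2) in auto)
        qed
      qed
    qed
  qed
  thus ?thesis unfolding GAS_def using KL by blast
qed

lemma main_equiv:
  "(LES h \<longleftrightarrow> LES_VSR Fb) \<and> (GALES h \<longleftrightarrow> SLES_VSR Fb) \<and> (GES h \<longleftrightarrow> SES_VSR Fb)"
  unfolding GALES_def SLES_VSR_def
  using LES_to_DT LES_from_DT GAS_to_DT GAS_from_DT GES_to_DT GES_from_DT by blast

end

theorem theorem3:
  fixes f :: "real^'n \<Rightarrow> real^'m \<Rightarrow> real^'n"
    and U :: "real^'n \<Rightarrow> real \<Rightarrow> real^'m"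
  assumes "assumption1 f"
    and "assumption2 (\<lambda>x. U x 0)"
    and "StL U"
    and "StC (\<lambda>x T. U x 0) U"
  shows "(LES (\<lambda>x. f x (U x 0)) \<longleftrightarrow> LES_VSR (\<lambda>x T. Fe f x (U x T) T))
       \<and> (GALES (\<lambda>x. f x (U x 0)) \<longleftrightarrow> SLES_VSR (\<lambda>x T. Fe f x (U x T) T))
       \<and> (GES (\<lambda>x. f x (U x 0)) \<longleftrightarrow> SES_VSR (\<lambda>x T. Fe f x (U x T) T))"
proof -
  interpret S: sys f U using assms by unfold_locales
  have h: "S.h = (\<lambda>x. f x (U x 0))" unfolding S.h_def S.uc_def ..
  have F: "S.Fb = (\<lambda>x T. Fe f x (U x T) T)" unfolding S.Fb_def ..
  show ?thesis using S.main_equiv unfolding h F .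
qed


end
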